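(* Suppose $\mathcal{H}$ is a hereditary $3$-graph property and $\mathcal{B}_{\mathcal{H}}$ contains infinitely many pairwise non-isomorphic $3$-graphs. Then there is $C>0$ such that $\epsilon^{-C}\leq M_{\mathcal{H}}(\epsilon)$ for all sufficiently small $\epsilon>0$; moreover, whenever $M^{hom}_{\mathcal H}$ is defined, $M_{\mathcal{H}}(\epsilon)\leq M^{hom}_{\mathcal{H}}(\epsilon^4)$.
   Context: $3$-graphs $H=(V,E)$, $E\subseteq\binom V3$; hereditary $3$-graph properties are classes of finite $3$-graphs closed under isomorphism and induced sub-$3$-graphs. $d_H(X,Y,Z)=|\{(x,y,z)\in X\times Y\times Z:\{x,y,z\}\in E\}|/(|X||Y||Z|)$. A triple is $\epsilon$-regular if $|d_H(X,Y,Z)-d_H(X',Y',Z')|\le\epsilon$ for all $X'\subseteq X,Y'\subseteq Y,Z'\subseteq Z$ of sizes at least $\epsilon|X|,\epsilon|Y|,\epsilon|Z|$; $\epsilon$-homogeneous if $d_H(X,Y,Z)\in[0,\epsilon)\cup(1-\epsilon,1]$. A partition $\mathcal P$ of $V$ is $\epsilon$-regular (resp. homogeneous) if at least $(1-\epsilon)|V|^3$ triples of $V^3$ lie in $X\times Y\times Z$ for an $\epsilon$-regular (resp. $\epsilon$-homogeneous) $(X,Y,Z)\in\mathcal P^3$. $M_{\mathcal H}(\epsilon)$ (resp. $M^{hom}_{\mathcal H}(\epsilon)$) is the least $M$ such that all sufficiently large members of $\mathcal H$ have an $\epsilon$-regular (resp. $\epsilon$-homogeneous) partition with at most $M$ parts;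 $M^{hom}_{\mathcal H}$ is defined if such $M$ exists for all $\epsilon$. For a $3$-graph $G=(V,E)$, $x\sim_G y$ means: for all $z_1,z_2\in V\setminus\{x,y\}$, $xz_1z_2\in E$ iff $yz_1z_2\in E$ (an equivalence relation); $G$ is irreducible if every $\sim_G$-class has size $1$ or $2$. For a $3$-graph $G=(U,E)$ and $n\ge1$, an $n$-blowup of $G$ is a $3$-graph with vertex set $\bigcup_{u\in U}V_u$, disjoint $|V_u|=n$, in which for distinct $u_1,u_2,u_3$ every triple $\{x_1,x_2,x_3\}$ with $x_i\in V_{u_i}$ is an edge if $u_1u_2u_3\in E$ and is a non-edge otherwise (triples meeting some $V_u$ twice are arbitrary). $\mathcal B_{\mathcal H}$ is the class of irreducible $3$-graphs $G$ such that for every $n\ge1$, some $n$-blowup of $G$ lies in $\mathcal H$. *)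

theory Defs
  imports Complex_Main
begin

text \<open>A 3-graph is a pair (V, E) of a finite vertex set and a set of 3-element subsets.
  Vertices are natural numbers (every finite 3-graph is isomorphic to one on nat).\<close>

type_synonym hg = "nat set \<times> nat set set"

definition verts :: "hg \<Rightarrow> nat set" where "verts G = fst G"
definition edges :: "hg \<Rightarrow> nat set set" where "edges G = snd G"

definition is_3graph :: "hg \<Rightarrow> bool" where
  "is_3graph G \<longleftrightarrow> finite (verts G) \<and> (\<forall>e\<in>edges G. e \<subseteq> verts G \<and> card e = 3)"

definition hg_iso :: "hg \<Rightarrow> hg \<Rightarrow> bool" where
  "hg_iso G G' \<longleftrightarrow> (\<exists>f. bij_betw f (verts G) (verts G') \<and>
      (\<forall>e. e \<subseteq> verts G \<longrightarrow> (e \<in> edges G \<longleftrightarrow> f ` e \<in> edges G')))"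

definition induced_sub :: "hg \<Rightarrow> nat set \<Rightarrow> hg" where
  "induced_sub G W = (W, {e \<in> edges G. e \<subseteq> W})"

definition hereditary :: "hg set \<Rightarrow> bool" where
  "hereditary H \<longleftrightarrow> (\<forall>G\<in>H. is_3graph G) \<and>
     (\<forall>G\<in>H. \<forall>G'. is_3graph G' \<and> hg_iso G G' \<longrightarrow> G' \<in> H) \<and>
     (\<forall>G\<in>H. \<forall>W. W \<subseteq> verts G \<longrightarrow> induced_sub G W \<in> H)"

definition density :: "hg \<Rightarrow> nat set \<Rightarrow> nat set \<Rightarrow> nat set \<Rightarrow> real" where
  "density G X Y Z =
     real (card {(x,y,z). x \<in> X \<and> y \<in> Y \<and> z \<in> Z \<and> {x,y,z} \<in> edges G})
     / (real (card X) * real (card Y) * real (card Z))"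

definition eps_regular_triple :: "hg \<Rightarrow> real \<Rightarrow> nat set \<Rightarrow> nat set \<Rightarrow> nat set \<Rightarrow> bool" where
  "eps_regular_triple G \<epsilon> X Y Z \<longleftrightarrow>
     (\<forall>X' Y' Z'. X' \<subseteq> X \<and> Y' \<subseteq> Y \<and> Z' \<subseteq> Z \<and>
        real (card X') \<ge> \<epsilon> * real (card X) \<and> real (card Y') \<ge> \<epsilon> * real (card Y) \<and>
        real (card Z') \<ge> \<epsilon> * real (card Z) \<longrightarrow>
        \<bar>density G X Y Z - density G X' Y' Z'\<bar> \<le> \<epsilon>)"

definition eps_homogeneous_triple :: "hg \<Rightarrow> real \<Rightarrow> nat set \<Rightarrow> nat set \<Rightarrow> nat set \<Rightarrow> bool" where
  "eps_homogeneous_triple G \<epsilon> X Y Z \<longleftrightarrow>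
     (let d = density G X Y Z in (0 \<le> d \<and> d < \<epsilon>) \<or> (1 - \<epsilon> < d \<and> d \<le> 1))"

definition is_partition :: "nat set set \<Rightarrow> nat set \<Rightarrow> bool" where
  "is_partition P V \<longleftrightarrow> \<Union>P = V \<and> {} \<notin> P \<and>
     (\<forall>A\<in>P. \<forall>B\<in>P. A \<noteq> B \<longrightarrow> A \<inter> B = {})"

definition good_partition ::
  "(nat set \<Rightarrow> nat set \<Rightarrow> nat set \<Rightarrow> bool) \<Rightarrow> hg \<Rightarrow> real \<Rightarrow> nat set set \<Rightarrow> bool" where
  "good_partition Q G \<epsilon> P \<longleftrightarrow>
     real (card {(x,y,z). \<exists>X\<in>P. \<exists>Y\<in>P. \<exists>Z\<in>P. Q X Y Z \<and> x \<in> X \<and> y \<in> Y \<and> z \<in> Z})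
       \<ge> (1 - \<epsilon>) * real (card (verts G)) ^ 3"

definition eps_regular_partition :: "hg \<Rightarrow> real \<Rightarrow> nat set set \<Rightarrow> bool" where
  "eps_regular_partition G \<epsilon> P \<longleftrightarrow> good_partition (eps_regular_triple G \<epsilon>) G \<epsilon> P"

definition eps_homogeneous_partition :: "hg \<Rightarrow> real \<Rightarrow> nat set set \<Rightarrow> bool" where
  "eps_homogeneous_partition G \<epsilon> P \<longleftrightarrow> good_partition (eps_homogeneous_triple G \<epsilon>) G \<epsilon> P"

definition bound_works :: "(hg \<Rightarrow> real \<Rightarrow> nat set set \<Rightarrow> bool) \<Rightarrow> hg set \<Rightarrow> real \<Rightarrow> nat \<Rightarrow> bool" where
  "bound_works R H \<epsilon> M \<longleftrightarrow> (\<exists>N. \<forall>G\<in>H. card (verts G) \<ge> N \<longrightarrow>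
      (\<exists>P. is_partition P (verts G) \<and> card P \<le> M \<and> R G \<epsilon> P))"

definition M_reg :: "hg set \<Rightarrow> real \<Rightarrow> nat" where
  "M_reg H \<epsilon> = (LEAST M. bound_works eps_regular_partition H \<epsilon> M)"

definition M_hom :: "hg set \<Rightarrow> real \<Rightarrow> nat" where
  "M_hom H \<epsilon> = (LEAST M. bound_works eps_homogeneous_partition H \<epsilon> M)"

definition M_hom_defined :: "hg set \<Rightarrow> bool" where
  "M_hom_defined H \<longleftrightarrow> (\<forall>\<epsilon>>0. \<exists>M. bound_works eps_homogeneous_partition H \<epsilon> M)"

definition hg_equiv :: "hg \<Rightarrow> nat \<Rightarrow> nat \<Rightarrow> bool" where
  "hg_equiv G x y \<longleftrightarrow> (\<forall>z1\<in>verts G - {x,y}. \<forall>z2\<in>verts G - {x,y}.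
      {x,z1,z2} \<in> edges G \<longleftrightarrow> {y,z1,z2} \<in> edges G)"

definition irreducible :: "hg \<Rightarrow> bool" where
  "irreducible G \<longleftrightarrow> (\<forall>x\<in>verts G. card {y \<in> verts G. hg_equiv G x y} \<le> 2)"

text \<open>B is an n-blowup of G: f maps each vertex of B to the part V_u containing it.\<close>
definition is_blowup :: "nat \<Rightarrow> hg \<Rightarrow> hg \<Rightarrow> bool" where
  "is_blowup n G B \<longleftrightarrow> is_3graph B \<and> (\<exists>f. f ` verts B \<subseteq> verts G \<and>
      (\<forall>u\<in>verts G. card {x \<in> verts B. f x = u} = n) \<and>
      (\<forall>x1\<in>verts B. \<forall>x2\<in>verts B. \<forall>x3\<in>verts B.
         f x1 \<noteq> f x2 \<and> f x1 \<noteq> f x3 \<and> f x2 \<noteq> f x3 \<longrightarrow>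
         ({x1,x2,x3} \<in> edges B \<longleftrightarrow> {f x1, f x2, f x3} \<in> edges G)))"

definition B_set :: "hg set \<Rightarrow> hg set" where
  "B_set H = {G. is_3graph G \<and> irreducible G \<and> (\<forall>n\<ge>1. \<exists>B\<in>H. is_blowup n G B)}"

end

theory Submission
  imports Defs
begin


lemma sq_identity:
  fixes a w :: "'i \<Rightarrow> real"
  assumes "\<forall>i\<in>I. w i > 0"
  shows "(\<Sum>i\<in>I. (a i - t * w i)^2 / w i) = (\<Sum>i\<in>I. a i ^2 / w i) - 2*t*(\<Sum>i\<in>I. a i) + t^2 * (\<Sum>i\<in>I. w i)"
proof -
  have "\<forall>i\<in>I. (a i - t * w i)^2 / w i = a i ^2 / w i - 2*t*a i + t^2 * w i"
    using assms by (auto simp: field_simps power2_eq_square)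
  then have "(\<Sum>i\<in>I. (a i - t * w i)^2 / w i) = (\<Sum>i\<in>I. a i ^2 / w i - 2*t*a i + t^2 * w i)"
    by (intro sum.cong) auto
  also have "\<dots> = (\<Sum>i\<in>I. a i ^2 / w i) - 2*t*(\<Sum>i\<in>I. a i) + t^2 * (\<Sum>i\<in>I. w i)"
    by (simp add: sum.distrib sum_subtractf sum_distrib_left)
  finally show ?thesis .
qed

lemma cs_weighted:
  fixes a w :: "'i \<Rightarrow> real"
  assumes "finite I" "I \<noteq> {}" "\<forall>i\<in>I. w i > 0"
  shows "(\<Sum>i\<in>I. a i)^2 / (\<Sum>i\<in>I. w i) \<le> (\<Sum>i\<in>I. a i ^2 / w i)"
proof -
  define A where "A = (\<Sum>i\<in>I. a i)"
  define W where "W = (\<Sum>i\<in>I. w i)"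
  have Wp: "W > 0" unfolding W_def using assms by (intro sum_pos) auto
  have "0 \<le> (\<Sum>i\<in>I. (a i - (A/W) * w i)^2 / w i)"
    using assms by (intro sum_nonneg) auto
  also have "\<dots> = (\<Sum>i\<in>I. a i ^2 / w i) - 2*(A/W)*A + (A/W)^2 * W"
    using sq_identity[OF assms(3), of a "A/W"] unfolding A_def W_def by simp
  also have "\<dots> = (\<Sum>i\<in>I. a i ^2 / w i) - A^2/W"
    using Wp by (simp add: field_simps power2_eq_square)
  finally show ?thesis unfolding A_def W_def by simp
qed

lemma incr_weighted:
  fixes a w :: "'i \<Rightarrow> real"
  assumes "finite I" "\<forall>i\<in>I. w i > 0" "I1 \<subseteq> I" "I1 \<noteq> {}"
  shows "(\<Sum>i\<in>I. a i)^2 / (\<Sum>i\<in>I. w i)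
     + (\<Sum>i\<in>I1. w i) * ((\<Sum>i\<in>I1. a i)/(\<Sum>i\<in>I1. w i) - (\<Sum>i\<in>I. a i)/(\<Sum>i\<in>I. w i))^2
     \<le> (\<Sum>i\<in>I. a i ^2 / w i)"
proof -
  define A where "A = (\<Sum>i\<in>I. a i)"
  define W where "W = (\<Sum>i\<in>I. w i)"
  define A1 where "A1 = (\<Sum>i\<in>I1. a i)"
  define W1 where "W1 = (\<Sum>i\<in>I1. w i)"
  define d where "d = A / W"
  have f1: "finite I1" using assms finite_subset by blast
  have Wp: "W > 0" unfolding W_def using assms by (intro sum_pos) auto
  have W1p: "W1 > 0" unfolding W1_def using assms f1 by (intro sum_pos) auto
  have e0: "(\<Sum>i\<in>I. a i ^2 / w i) = (\<Sum>i\<in>I. (a i - d * w i)^2 / w i) + (2*d*A - d^2 * W)"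
    using sq_identity[OF assms(2), of a d] unfolding A_def W_def by simp
  have "2*d*A - d^2 * W = A^2/W" unfolding d_def using Wp by (simp add: field_simps power2_eq_square)
  with e0 have e1: "(\<Sum>i\<in>I. a i ^2 / w i) = (\<Sum>i\<in>I. (a i - d * w i)^2 / w i) + A^2/W" by simp
  have "(\<Sum>i\<in>I1. (a i - d * w i)^2 / w i) \<le> (\<Sum>i\<in>I. (a i - d * w i)^2 / w i)"
    using assms by (intro sum_mono2) auto
  moreover have "(\<Sum>i\<in>I1. (a i - d * w i))^2 / W1 \<le> (\<Sum>i\<in>I1. (a i - d * w i)^2 / w i)"
    using cs_weighted[OF f1 assms(4), of w "\<lambda>i. a i - d * w i"] assms unfolding W1_def by auto
  moreover have "(\<Sum>i\<in>I1. (a i - d * w i)) = A1 - d * W1"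
    unfolding A1_def W1_def by (simp add: sum_subtractf sum_distrib_left)
  moreover have "(A1 - d * W1)^2 / W1 = W1 * (A1/W1 - d)^2"
    using W1p by (simp add: field_simps power2_eq_square)
  ultimately have "W1 * (A1/W1 - d)^2 \<le> (\<Sum>i\<in>I. (a i - d * w i)^2 / w i)" by simp
  then show ?thesis using e1 unfolding A_def W_def A1_def W1_def d_def by simp
qed


definition ind :: "hg \<Rightarrow> nat \<Rightarrow> nat \<Rightarrow> nat \<Rightarrow> real" where
  "ind G x y z = (if {x,y,z} \<in> edges G then 1 else 0)"

definition Ssum :: "hg \<Rightarrow> nat set \<Rightarrow> nat set \<Rightarrow> nat set \<Rightarrow> real" where
  "Ssum G X Y Z = (\<Sum>x\<in>X. \<Sum>y\<in>Y. \<Sum>z\<in>Z. ind G x y z)"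

definition wt :: "nat set \<Rightarrow> nat set \<Rightarrow> nat set \<Rightarrow> real" where
  "wt X Y Z = real (card X) * real (card Y) * real (card Z)"

lemma card_triples:
  assumes "finite X" "finite Y" "finite Z"
  shows "real (card {(x,y,z). x \<in> X \<and> y \<in> Y \<and> z \<in> Z \<and> Q x y z})
       = (\<Sum>x\<in>X. \<Sum>y\<in>Y. \<Sum>z\<in>Z. if Q x y z then 1 else 0)"
proof -
  have e: "{(x,y,z). x \<in> X \<and> y \<in> Y \<and> z \<in> Z \<and> Q x y z} = Sigma X (\<lambda>x. Sigma Y (\<lambda>y. {z\<in>Z. Q x y z}))"
    by auto
  have "card (Sigma X (\<lambda>x. Sigma Y (\<lambda>y. {z\<in>Z. Q x y z}))) = (\<Sum>x\<in>X. \<Sum>y\<in>Y. card {z\<in>Z. Q x y z})"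
    using assms by (simp add: card_SigmaI)
  moreover have "\<And>x y. real (card {z\<in>Z. Q x y z}) = (\<Sum>z\<in>Z. if Q x y z then 1 else 0)"
    using assms(3) by (simp add: sum.If_cases Int_def conj_commute)
  ultimately show ?thesis unfolding e by simp
qed

lemma density_eq:
  assumes "finite X" "finite Y" "finite Z"
  shows "density G X Y Z = Ssum G X Y Z / wt X Y Z"
  unfolding density_def Ssum_def wt_def ind_def using card_triples[OF assms] by simp

lemma Ssum_nonneg: "Ssum G X Y Z \<ge> 0"
  unfolding Ssum_def ind_def by (auto intro!: sum_nonneg)

lemma wt_eq_sum: "finite X \<Longrightarrow> finite Y \<Longrightarrow> finite Z \<Longrightarrow> wt X Y Z = (\<Sum>x\<in>X. \<Sum>y\<in>Y. \<Sum>z\<in>Z. (1::real))"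
  unfolding wt_def by simp

lemma Ssum_le_wt: "finite X \<Longrightarrow> finite Y \<Longrightarrow> finite Z \<Longrightarrow> Ssum G X Y Z \<le> wt X Y Z"
  unfolding wt_eq_sum Ssum_def ind_def by (intro sum_mono) auto

lemma Ssum_mono:
  assumes "finite X" "finite Y" "finite Z" "X' \<subseteq> X" "Y' \<subseteq> Y" "Z' \<subseteq> Z"
  shows "Ssum G X' Y' Z' \<le> Ssum G X Y Z"
proof -
  have "Ssum G X' Y' Z' \<le> (\<Sum>x\<in>X'. \<Sum>y\<in>Y'. \<Sum>z\<in>Z. ind G x y z)"
    unfolding Ssum_def using assms by (intro sum_mono sum_mono2) (auto simp: ind_def)
  also have "\<dots> \<le> (\<Sum>x\<in>X'. \<Sum>y\<in>Y. \<Sum>z\<in>Z. ind G x y z)"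
    using assms by (intro sum_mono sum_mono2) (auto simp: ind_def intro!: sum_nonneg)
  also have "\<dots> \<le> Ssum G X Y Z"
    unfolding Ssum_def using assms by (intro sum_mono2) (auto simp: ind_def intro!: sum_nonneg)
  finally show ?thesis .
qed

lemma coSsum_mono:
  assumes "finite X" "finite Y" "finite Z" "X' \<subseteq> X" "Y' \<subseteq> Y" "Z' \<subseteq> Z"
  shows "wt X' Y' Z' - Ssum G X' Y' Z' \<le> wt X Y Z - Ssum G X Y Z"
proof -
  have fin: "finite X'" "finite Y'" "finite Z'" using assms finite_subset by blast+
  have r: "\<And>A B C. finite A \<Longrightarrow> finite B \<Longrightarrow> finite C \<Longrightarrow> wt A B C - Ssum G A B C = (\<Sum>x\<in>A. \<Sum>y\<in>B. \<Sum>z\<in>C. 1 - ind G x y z)"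
    unfolding wt_eq_sum Ssum_def by (simp add: sum_subtractf)
  have "(\<Sum>x\<in>X'. \<Sum>y\<in>Y'. \<Sum>z\<in>Z'. 1 - ind G x y z) \<le> (\<Sum>x\<in>X'. \<Sum>y\<in>Y'. \<Sum>z\<in>Z. 1 - ind G x y z)"
    using assms by (intro sum_mono sum_mono2) (auto simp: ind_def)
  also have "\<dots> \<le> (\<Sum>x\<in>X'. \<Sum>y\<in>Y. \<Sum>z\<in>Z. 1 - ind G x y z)"
    using assms by (intro sum_mono sum_mono2) (auto simp: ind_def intro!: sum_nonneg)
  also have "\<dots> \<le> (\<Sum>x\<in>X. \<Sum>y\<in>Y. \<Sum>z\<in>Z. 1 - ind G x y z)"
    using assms by (intro sum_mono2) (auto simp: ind_def intro!: sum_nonneg)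
  finally show ?thesis using r[OF fin] r[OF assms(1-3)] by simp
qed


definition part_of :: "nat set set \<Rightarrow> nat set \<Rightarrow> bool" where
  "part_of F X \<longleftrightarrow> finite F \<and> (\<forall>A\<in>F. finite A \<and> A \<noteq> {}) \<and> (\<forall>A\<in>F. \<forall>B\<in>F. A \<noteq> B \<longrightarrow> A \<inter> B = {}) \<and> \<Union>F = X"

lemma part_of_partition: "is_partition P V \<Longrightarrow> finite V \<Longrightarrow> part_of P V"
proof -
  assume a: "is_partition P V" "finite V"
  have u: "\<Union>P = V" and e: "{} \<notin> P" and d: "\<forall>A\<in>P. \<forall>B\<in>P. A \<noteq> B \<longrightarrow> A \<inter> B = {}"
    using a(1) unfolding is_partition_def by auto
  have "finite P" using finite_UnionD[of P] u a(2) by simp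
  moreover have "\<forall>A\<in>P. finite A \<and> A \<noteq> {}"
  proof
    fix A assume "A \<in> P"
    then have "A \<subseteq> V" using u by blast
    then show "finite A \<and> A \<noteq> {}" using a(2) e \<open>A \<in> P\<close> finite_subset by metis
  qed
  ultimately show ?thesis using u d unfolding part_of_def by simp
qed

lemma part_ofD:
  assumes "part_of F X"
  shows "finite F" "\<And>A. A \<in> F \<Longrightarrow> finite A" "\<And>A. A \<in> F \<Longrightarrow> A \<noteq> {}" "\<Union>F = X"
    "\<And>A B. A \<in> F \<Longrightarrow> B \<in> F \<Longrightarrow> A \<noteq> B \<Longrightarrow> A \<inter> B = {}"
  using assms unfolding part_of_def by blast+

lemma part_of_finite_set: "part_of F X \<Longrightarrow> finite X"
  using part_ofD[of F X] by blast

definition T3 :: "(nat \<Rightarrow> nat \<Rightarrow> nat \<Rightarrow> real) \<Rightarrow> nat set \<Rightarrow> nat set \<Rightarrow> nat set \<Rightarrow> real" where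
  "T3 f X Y Z = (\<Sum>x\<in>X. \<Sum>y\<in>Y. \<Sum>z\<in>Z. f x y z)"

lemma sum_part:
  assumes "part_of F X"
  shows "sum g X = (\<Sum>A\<in>F. sum g A)"
proof -
  have a: "\<forall>A\<in>F. finite A" "\<forall>A\<in>F. \<forall>B\<in>F. A \<noteq> B \<longrightarrow> A \<inter> B = {}" "X = \<Union>F"
    using assms unfolding part_of_def by auto
  have "sum g (\<Union>F) = (sum \<circ> sum) g F" by (rule sum.Union_disjoint[OF a(1,2)])
  then show ?thesis using a(3) by simp
qed

lemma T3_union1:
  assumes "part_of F X"
  shows "T3 f X Y Z = (\<Sum>A\<in>F. T3 f A Y Z)"
  unfolding T3_def by (rule sum_part[OF assms])

lemma T3_union2:
  assumes "part_of F Y"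
  shows "T3 f X Y Z = (\<Sum>B\<in>F. T3 f X B Z)"
proof -
  have "\<And>x. (\<Sum>y\<in>Y. \<Sum>z\<in>Z. f x y z) = (\<Sum>B\<in>F. \<Sum>y\<in>B. \<Sum>z\<in>Z. f x y z)"
    by (rule sum_part[OF assms])
  then have "T3 f X Y Z = (\<Sum>x\<in>X. \<Sum>B\<in>F. \<Sum>y\<in>B. \<Sum>z\<in>Z. f x y z)"
    unfolding T3_def by simp
  also have "\<dots> = (\<Sum>B\<in>F. T3 f X B Z)" unfolding T3_def by (rule sum.swap)
  finally show ?thesis .
qed

lemma T3_union3:
  assumes "part_of F Z"
  shows "T3 f X Y Z = (\<Sum>C\<in>F. T3 f X Y C)"
proof -
  have "\<And>x y. (\<Sum>z\<in>Z. f x y z) = (\<Sum>C\<in>F. \<Sum>z\<in>C. f x y z)"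
    by (rule sum_part[OF assms])
  then have "T3 f X Y Z = (\<Sum>x\<in>X. \<Sum>y\<in>Y. \<Sum>C\<in>F. \<Sum>z\<in>C. f x y z)"
    unfolding T3_def by simp
  also have "\<dots> = (\<Sum>x\<in>X. \<Sum>C\<in>F. \<Sum>y\<in>Y. \<Sum>z\<in>C. f x y z)"
    by (simp add: sum.swap[of _ Y])
  also have "\<dots> = (\<Sum>C\<in>F. T3 f X Y C)" unfolding T3_def by (rule sum.swap)
  finally show ?thesis .
qed

lemma T3_union:
  assumes "part_of FX X" "part_of FY Y" "part_of FZ Z"
  shows "T3 f X Y Z = (\<Sum>c\<in>FX \<times> FY \<times> FZ. T3 f (fst c) (fst (snd c)) (snd (snd c)))"
proof -
  have "T3 f X Y Z = (\<Sum>A\<in>FX. T3 f A Y Z)" using T3_union1[OF assms(1)] .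
  also have "\<dots> = (\<Sum>A\<in>FX. \<Sum>B\<in>FY. T3 f A B Z)" using T3_union2[OF assms(2)] by simp
  also have "\<dots> = (\<Sum>A\<in>FX. \<Sum>B\<in>FY. \<Sum>C\<in>FZ. T3 f A B C)" using T3_union3[OF assms(3)] by simp
  also have "\<dots> = (\<Sum>A\<in>FX. \<Sum>(B,C)\<in>FY \<times> FZ. T3 f A B C)" by (simp add: sum.cartesian_product)
  also have "\<dots> = (\<Sum>(A,B,C)\<in>FX \<times> FY \<times> FZ. T3 f A B C)" by (simp add: sum.cartesian_product)
  finally show ?thesis by (simp add: case_prod_beta)
qed

lemma Ssum_T3: "Ssum G X Y Z = T3 (ind G) X Y Z" unfolding Ssum_def T3_def ..
lemma wt_T3: "finite X \<Longrightarrow> finite Y \<Longrightarrow> finite Z \<Longrightarrow> wt X Y Z = T3 (\<lambda>_ _ _. 1) X Y Z"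
  unfolding T3_def by (simp add: wt_eq_sum)

definition gsq :: "hg \<Rightarrow> nat set \<Rightarrow> nat set \<Rightarrow> nat set \<Rightarrow> real" where
  "gsq G X Y Z = Ssum G X Y Z ^2 / wt X Y Z"

lemma wt_pos: "finite X \<Longrightarrow> finite Y \<Longrightarrow> finite Z \<Longrightarrow> X \<noteq> {} \<Longrightarrow> Y \<noteq> {} \<Longrightarrow> Z \<noteq> {} \<Longrightarrow> wt X Y Z > 0"
  unfolding wt_def by (simp add: card_gt_0_iff)

lemma part_of_sub:
  assumes "part_of F X" "F' \<subseteq> F"
  shows "part_of F' (\<Union>F')"
proof -
  have "finite F'" using assms unfolding part_of_def using finite_subset by blast
  moreover have "\<forall>A\<in>F'. finite A \<and> A \<noteq> {}" using assms unfolding part_of_def by blast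
  moreover have "\<forall>A\<in>F'. \<forall>B\<in>F'. A \<noteq> B \<longrightarrow> A \<inter> B = {}" using assms unfolding part_of_def by blast
  ultimately show ?thesis unfolding part_of_def by simp
qed

lemma box_gain:
  assumes "part_of FX X" "part_of FY Y" "part_of FZ Z"
    and "FX' \<subseteq> FX" "FY' \<subseteq> FY" "FZ' \<subseteq> FZ" "FX' \<noteq> {}" "FY' \<noteq> {}" "FZ' \<noteq> {}"
  shows "gsq G X Y Z + wt (\<Union>FX') (\<Union>FY') (\<Union>FZ') *
            (Ssum G (\<Union>FX') (\<Union>FY') (\<Union>FZ') / wt (\<Union>FX') (\<Union>FY') (\<Union>FZ') - Ssum G X Y Z / wt X Y Z)^2
         \<le> (\<Sum>c\<in>FX \<times> FY \<times> FZ. gsq G (fst c) (fst (snd c)) (snd (snd c)))"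
proof -
  let ?I = "FX \<times> FY \<times> FZ" and ?I1 = "FX' \<times> FY' \<times> FZ'"
  let ?a = "\<lambda>c. Ssum G (fst c) (fst (snd c)) (snd (snd c))"
  let ?w = "\<lambda>c. wt (fst c) (fst (snd c)) (snd (snd c))"
  have fin: "finite ?I" using part_ofD(1)[OF assms(1)] part_ofD(1)[OF assms(2)] part_ofD(1)[OF assms(3)] by simp
  have wp: "\<forall>c\<in>?I. ?w c > 0"
  proof
    fix c assume c: "c \<in> ?I"
    then have "fst c \<in> FX" "fst (snd c) \<in> FY" "snd (snd c) \<in> FZ" by auto
    then show "?w c > 0" using part_ofD(2,3)[OF assms(1)] part_ofD(2,3)[OF assms(2)] part_ofD(2,3)[OF assms(3)]
      by (intro wt_pos) auto
  qed
  have sub: "?I1 \<subseteq> ?I" by (intro Sigma_mono assms(4-6))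
  have ne: "?I1 \<noteq> {}" using assms(7-9) by simp
  have p': "part_of FX' (\<Union>FX')" "part_of FY' (\<Union>FY')" "part_of FZ' (\<Union>FZ')"
    using part_of_sub assms(1-6) by blast+
  have fX: "finite X" "finite Y" "finite Z" using assms(1-3) part_of_finite_set by blast+
  have fX': "finite (\<Union>FX')" "finite (\<Union>FY')" "finite (\<Union>FZ')" using p' part_of_finite_set by blast+
  have fc: "\<forall>c\<in>?I. finite (fst c) \<and> finite (fst (snd c)) \<and> finite (snd (snd c))"
  proof
    fix c assume c: "c \<in> ?I"
    then have "fst c \<in> FX" "fst (snd c) \<in> FY" "snd (snd c) \<in> FZ" by auto
    then show "finite (fst c) \<and> finite (fst (snd c)) \<and> finite (snd (snd c))"
      using part_ofD(2)[OF assms(1)] part_ofD(2)[OF assms(2)] part_ofD(2)[OF assms(3)] by blast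
  qed
  have a1: "(\<Sum>c\<in>?I. ?a c) = Ssum G X Y Z" unfolding Ssum_T3 using T3_union[OF assms(1-3)] by simp
  have "(\<Sum>c\<in>?I. ?w c) = (\<Sum>c\<in>?I. T3 (\<lambda>_ _ _. 1) (fst c) (fst (snd c)) (snd (snd c)))"
    using fc by (intro sum.cong refl) (auto simp: wt_T3)
  then have w1: "(\<Sum>c\<in>?I. ?w c) = wt X Y Z"
    using T3_union[OF assms(1-3), of "\<lambda>_ _ _. 1"] wt_T3[OF fX] by simp
  have a2: "(\<Sum>c\<in>?I1. ?a c) = Ssum G (\<Union>FX') (\<Union>FY') (\<Union>FZ')" unfolding Ssum_T3 using T3_union[OF p'] by simp
  have fc': "\<forall>c\<in>?I1. finite (fst c) \<and> finite (fst (snd c)) \<and> finite (snd (snd c))"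
    using fc sub by blast
  have "(\<Sum>c\<in>?I1. ?w c) = (\<Sum>c\<in>?I1. T3 (\<lambda>_ _ _. 1) (fst c) (fst (snd c)) (snd (snd c)))"
    using fc' by (intro sum.cong refl) (auto simp: wt_T3)
  then have w2: "(\<Sum>c\<in>?I1. ?w c) = wt (\<Union>FX') (\<Union>FY') (\<Union>FZ')"
    using T3_union[OF p', of "\<lambda>_ _ _. 1"] wt_T3[OF fX'] by simp
  have "(\<Sum>c\<in>?I. ?a c)^2 / (\<Sum>c\<in>?I. ?w c)
     + (\<Sum>c\<in>?I1. ?w c) * ((\<Sum>c\<in>?I1. ?a c)/(\<Sum>c\<in>?I1. ?w c) - (\<Sum>c\<in>?I. ?a c)/(\<Sum>c\<in>?I. ?w c))^2
     \<le> (\<Sum>c\<in>?I. ?a c ^2 / ?w c)"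
    by (rule incr_weighted[OF fin wp sub ne])
  then show ?thesis unfolding a1 a2 w1 w2 gsq_def by simp
qed

lemma aux_le: "0 \<le> (t::real) \<Longrightarrow> g + t \<le> s \<Longrightarrow> g \<le> s" by linarith

lemma box_mono:
  assumes "part_of FX X" "part_of FY Y" "part_of FZ Z"
  shows "gsq G X Y Z \<le> (\<Sum>c\<in>FX \<times> FY \<times> FZ. gsq G (fst c) (fst (snd c)) (snd (snd c)))"
proof (cases "FX = {} \<or> FY = {} \<or> FZ = {}")
  case True
  then have "X = {} \<or> Y = {} \<or> Z = {}" using part_ofD(4)[OF assms(1)] part_ofD(4)[OF assms(2)] part_ofD(4)[OF assms(3)] by auto
  then have "gsq G X Y Z = 0" unfolding gsq_def wt_def by auto
  moreover have "0 \<le> (\<Sum>c\<in>FX \<times> FY \<times> FZ. gsq G (fst c) (fst (snd c)) (snd (snd c)))"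
    unfolding gsq_def wt_def by (intro sum_nonneg) simp
  ultimately show ?thesis by simp
next
  case False
  have "0 \<le> wt (\<Union>FX) (\<Union>FY) (\<Union>FZ) *
            (Ssum G (\<Union>FX) (\<Union>FY) (\<Union>FZ) / wt (\<Union>FX) (\<Union>FY) (\<Union>FZ) - Ssum G X Y Z / wt X Y Z)^2"
    unfolding wt_def by (intro mult_nonneg_nonneg) auto
  moreover have "gsq G X Y Z + wt (\<Union>FX) (\<Union>FY) (\<Union>FZ) *
            (Ssum G (\<Union>FX) (\<Union>FY) (\<Union>FZ) / wt (\<Union>FX) (\<Union>FY) (\<Union>FZ) - Ssum G X Y Z / wt X Y Z)^2
     \<le> (\<Sum>c\<in>FX \<times> FY \<times> FZ. gsq G (fst c) (fst (snd c)) (snd (snd c)))"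
    using False by (intro box_gain[OF assms subset_refl subset_refl subset_refl]) auto
  ultimately show ?thesis by (rule aux_le)
qed


definition atoms :: "nat set \<Rightarrow> nat set set \<Rightarrow> nat set set" where
  "atoms X Ws = (\<lambda>x. {y\<in>X. \<forall>W\<in>Ws. (y\<in>W) = (x\<in>W)}) ` X"

lemma atoms_sub: "A \<in> atoms X Ws \<Longrightarrow> A \<subseteq> X"
  unfolding atoms_def by auto

lemma atoms_ne: "A \<in> atoms X Ws \<Longrightarrow> A \<noteq> {}"
  unfolding atoms_def by auto

lemma atoms_Union: "\<Union>(atoms X Ws) = X"
  unfolding atoms_def by auto

lemma atoms_disj: "A \<in> atoms X Ws \<Longrightarrow> B \<in> atoms X Ws \<Longrightarrow> A \<noteq> B \<Longrightarrow> A \<inter> B = {}"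
  unfolding atoms_def by auto

lemma atoms_split: "A \<in> atoms X Ws \<Longrightarrow> W \<in> Ws \<Longrightarrow> A \<subseteq> W \<or> A \<inter> W = {}"
  unfolding atoms_def by auto

lemma atoms_part: "finite X \<Longrightarrow> part_of (atoms X Ws) X"
proof -
  assume f: "finite X"
  have "finite (atoms X Ws)" unfolding atoms_def using f by simp
  moreover have "\<forall>A\<in>atoms X Ws. finite A \<and> A \<noteq> {}"
    using atoms_sub atoms_ne f finite_subset by metis
  moreover have "\<forall>A\<in>atoms X Ws. \<forall>B\<in>atoms X Ws. A \<noteq> B \<longrightarrow> A \<inter> B = {}"
    using atoms_disj by blast
  ultimately show ?thesis unfolding part_of_def using atoms_Union by simp
qed

lemma atoms_card:
  assumes "finite Ws"
  shows "card (atoms X Ws) \<le> 2 ^ card Ws"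
proof -
  let ?sig = "\<lambda>x. {W\<in>Ws. x \<in> W}"
  have "atoms X Ws = (\<lambda>S. {y\<in>X. ?sig y = S}) ` (?sig ` X)"
    unfolding atoms_def image_image by (intro image_cong refl) auto
  moreover have fin: "finite (?sig ` X)" by (rule finite_subset[of _ "Pow Ws"]) (use assms in auto)
  ultimately have "card (atoms X Ws) \<le> card (?sig ` X)" using card_image_le[OF fin] by simp
  also have "\<dots> \<le> card (Pow Ws)" using assms by (intro card_mono) auto
  also have "\<dots> = 2 ^ card Ws" using assms by (simp add: card_Pow)
  finally show ?thesis .
qed

lemma atoms_sub_Union:
  assumes "W \<in> Ws" "W \<subseteq> X"
  shows "\<Union>{A\<in>atoms X Ws. A \<subseteq> W} = W"
proof
  show "\<Union>{A\<in>atoms X Ws. A \<subseteq> W} \<subseteq> W" by blast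
  show "W \<subseteq> \<Union>{A\<in>atoms X Ws. A \<subseteq> W}"
  proof
    fix x assume x: "x \<in> W"
    let ?A = "{y\<in>X. \<forall>W\<in>Ws. (y\<in>W) = (x\<in>W)}"
    have "?A \<in> atoms X Ws" unfolding atoms_def using x assms by auto
    moreover have "?A \<subseteq> W" using x assms by auto
    moreover have "x \<in> ?A" using x assms by auto
    ultimately show "x \<in> \<Union>{A\<in>atoms X Ws. A \<subseteq> W}" by blast
  qed
qed

definition energy :: "hg \<Rightarrow> nat set set \<Rightarrow> real" where
  "energy G P = (\<Sum>t\<in>P \<times> P \<times> P. gsq G (fst t) (fst (snd t)) (snd (snd t)))"

lemma gsq_nonneg: "gsq G X Y Z \<ge> 0"
  unfolding gsq_def wt_def by simp

lemma energy_nonneg: "energy G P \<ge> 0"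
  unfolding energy_def by (intro sum_nonneg gsq_nonneg)

lemma gsq_le_wt: "finite X \<Longrightarrow> finite Y \<Longrightarrow> finite Z \<Longrightarrow> gsq G X Y Z \<le> wt X Y Z"
proof -
  assume f: "finite X" "finite Y" "finite Z"
  have s0: "Ssum G X Y Z \<ge> 0" by (rule Ssum_nonneg)
  have s1: "Ssum G X Y Z \<le> wt X Y Z" using Ssum_le_wt[OF f] .
  show ?thesis
  proof (cases "wt X Y Z = 0")
    case True then show ?thesis unfolding gsq_def by simp
  next
    case False
    then have wp: "wt X Y Z > 0" unfolding wt_def by simp
    have "Ssum G X Y Z ^2 \<le> wt X Y Z * wt X Y Z"
      using s0 s1 unfolding power2_eq_square by (intro mult_mono) auto
    then show ?thesis unfolding gsq_def using wp by (simp add: divide_le_eq)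
  qed
qed

lemma card_part: "part_of P V \<Longrightarrow> real (card V) = (\<Sum>X\<in>P. real (card X))"
proof -
  assume p: "part_of P V"
  have "real (card V) = (\<Sum>x\<in>V. (1::real))" by simp
  also have "\<dots> = (\<Sum>X\<in>P. \<Sum>x\<in>X. (1::real))" by (rule sum_part[OF p])
  also have "\<dots> = (\<Sum>X\<in>P. real (card X))" by simp
  finally show ?thesis .
qed

lemma sum_wt_part: "part_of P V \<Longrightarrow> (\<Sum>t\<in>P \<times> P \<times> P. wt (fst t) (fst (snd t)) (snd (snd t))) = real (card V) ^ 3"
proof -
  assume p: "part_of P V"
  have "(\<Sum>t\<in>P \<times> P \<times> P. wt (fst t) (fst (snd t)) (snd (snd t)))
      = (\<Sum>X\<in>P. \<Sum>Y\<in>P. \<Sum>Z\<in>P. real (card X) * real (card Y) * real (card Z))"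
    unfolding wt_def by (simp add: sum.cartesian_product case_prod_beta)
  also have "\<dots> = (\<Sum>X\<in>P. real (card X)) * (\<Sum>Y\<in>P. real (card Y)) * (\<Sum>Z\<in>P. real (card Z))"
    by (simp add: sum_distrib_left sum_distrib_right mult_ac)
  also have "\<dots> = real (card V) ^ 3" using card_part[OF p] by (simp add: power3_eq_cube)
  finally show ?thesis .
qed

lemma energy_le: "part_of P V \<Longrightarrow> energy G P \<le> real (card V) ^ 3"
proof -
  assume p: "part_of P V"
  have "energy G P \<le> (\<Sum>t\<in>P \<times> P \<times> P. wt (fst t) (fst (snd t)) (snd (snd t)))"
    unfolding energy_def
  proof (rule sum_mono)
    fix t assume "t \<in> P \<times> P \<times> P"
    then have "fst t \<in> P" "fst (snd t) \<in> P" "snd (snd t) \<in> P" by auto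
    then show "gsq G (fst t) (fst (snd t)) (snd (snd t)) \<le> wt (fst t) (fst (snd t)) (snd (snd t))"
      using part_ofD(2)[OF p] by (intro gsq_le_wt) auto
  qed
  then show ?thesis using sum_wt_part[OF p] by simp
qed


definition box :: "nat set \<times> nat set \<times> nat set \<Rightarrow> (nat \<times> nat \<times> nat) set" where
  "box t = fst t \<times> fst (snd t) \<times> snd (snd t)"

lemma covered_eq:
  "{(x,y,z). \<exists>X\<in>P. \<exists>Y\<in>P. \<exists>Z\<in>P. R X Y Z \<and> x \<in> X \<and> y \<in> Y \<and> z \<in> Z}
   = \<Union>(box ` {t\<in>P \<times> P \<times> P. R (fst t) (fst (snd t)) (snd (snd t))})"
  unfolding box_def by (auto; blast)

lemma box_disj:
  assumes p: "part_of P V" and s: "s \<in> P \<times> P \<times> P" "t \<in> P \<times> P \<times> P" "s \<noteq> t"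
  shows "box s \<inter> box t = {}"
proof (rule ccontr)
  assume "box s \<inter> box t \<noteq> {}"
  then obtain x y z where xyz: "(x,y,z) \<in> box s" "(x,y,z) \<in> box t" by auto
  have m: "fst s \<in> P" "fst t \<in> P" "fst (snd s) \<in> P" "fst (snd t) \<in> P" "snd (snd s) \<in> P" "snd (snd t) \<in> P"
    using s by auto
  have "fst s = fst t"
  proof (rule ccontr)
    assume "fst s \<noteq> fst t"
    then have "fst s \<inter> fst t = {}" by (rule part_ofD(5)[OF p m(1,2)])
    then show False using xyz unfolding box_def by auto
  qed
  moreover have "fst (snd s) = fst (snd t)"
  proof (rule ccontr)
    assume "fst (snd s) \<noteq> fst (snd t)"
    then have "fst (snd s) \<inter> fst (snd t) = {}" by (rule part_ofD(5)[OF p m(3,4)])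
    then show False using xyz unfolding box_def by auto
  qed
  moreover have "snd (snd s) = snd (snd t)"
  proof (rule ccontr)
    assume "snd (snd s) \<noteq> snd (snd t)"
    then have "snd (snd s) \<inter> snd (snd t) = {}" by (rule part_ofD(5)[OF p m(5,6)])
    then show False using xyz unfolding box_def by auto
  qed
  ultimately have "s = t" by (simp add: prod_eq_iff)
  then show False using s by simp
qed

lemma card_box: "real (card (box t)) = wt (fst t) (fst (snd t)) (snd (snd t))"
  unfolding box_def wt_def by (simp add: card_cartesian_product)

lemma covered_card:
  assumes p: "part_of P V"
  shows "real (card {(x,y,z). \<exists>X\<in>P. \<exists>Y\<in>P. \<exists>Z\<in>P. R X Y Z \<and> x \<in> X \<and> y \<in> Y \<and> z \<in> Z})
    = (\<Sum>t\<in>{t\<in>P \<times> P \<times> P. R (fst t) (fst (snd t)) (snd (snd t))}. wt (fst t) (fst (snd t)) (snd (snd t)))"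
proof -
  let ?I = "{t\<in>P \<times> P \<times> P. R (fst t) (fst (snd t)) (snd (snd t))}"
  have fI: "finite ?I" using part_ofD(1)[OF p] by simp
  have fb: "\<forall>t\<in>?I. finite (box t)"
  proof
    fix t assume "t \<in> ?I"
    then have m: "fst t \<in> P" "fst (snd t) \<in> P" "snd (snd t) \<in> P" by auto
    show "finite (box t)" unfolding box_def
      by (intro finite_cartesian_product part_ofD(2)[OF p m(1)] part_ofD(2)[OF p m(2)] part_ofD(2)[OF p m(3)])
  qed
  have d: "\<forall>s\<in>?I. \<forall>t\<in>?I. s \<noteq> t \<longrightarrow> box s \<inter> box t = {}"
  proof (intro ballI impI)
    fix s t assume st: "s \<in> ?I" "t \<in> ?I" "s \<noteq> t"
    have m: "s \<in> P \<times> P \<times> P" "t \<in> P \<times> P \<times> P" using st(1,2) by blast+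
    show "box s \<inter> box t = {}" by (rule box_disj[OF p m st(3)])
  qed
  have "card (\<Union>(box ` ?I)) = (\<Sum>t\<in>?I. card (box t))"
    by (rule card_UN_disjoint[OF fI fb d])
  then have "real (card (\<Union>(box ` ?I))) = (\<Sum>t\<in>?I. real (card (box t)))" by simp
  then show ?thesis unfolding covered_eq card_box .
qed

lemma sum_split_pred:
  "finite I \<Longrightarrow> (\<Sum>t\<in>I. f t) = (\<Sum>t\<in>{t\<in>I. R t}. f t) + (\<Sum>t\<in>{t\<in>I. \<not> R t}. (f t :: real))"
proof -
  assume f: "finite I"
  have "I = {t\<in>I. R t} \<union> {t\<in>I. \<not> R t}" by auto
  moreover have "{t\<in>I. R t} \<inter> {t\<in>I. \<not> R t} = {}" by auto
  ultimately show ?thesis using f by (metis (no_types, lifting) finite_Un sum.union_disjoint)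
qed

lemma irr_mass:
  assumes p: "part_of P V" and V: "verts G = V" and nreg: "\<not> eps_regular_partition G \<epsilon> P"
  shows "\<epsilon> * real (card V) ^ 3 < (\<Sum>t\<in>{t\<in>P \<times> P \<times> P. \<not> eps_regular_triple G \<epsilon> (fst t) (fst (snd t)) (snd (snd t))}. wt (fst t) (fst (snd t)) (snd (snd t)))"
proof -
  let ?R = "eps_regular_triple G \<epsilon>"
  let ?w = "\<lambda>t. wt (fst t) (fst (snd t)) (snd (snd t))"
  have "real (card {(x,y,z). \<exists>X\<in>P. \<exists>Y\<in>P. \<exists>Z\<in>P. ?R X Y Z \<and> x \<in> X \<and> y \<in> Y \<and> z \<in> Z}) < (1 - \<epsilon>) * real (card V) ^ 3"
    using nreg V unfolding eps_regular_partition_def good_partition_def by simp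
  then have a: "(\<Sum>t\<in>{t\<in>P \<times> P \<times> P. ?R (fst t) (fst (snd t)) (snd (snd t))}. ?w t) < (1 - \<epsilon>) * real (card V) ^ 3"
    unfolding covered_card[OF p] .
  have fI: "finite (P \<times> P \<times> P)" using part_ofD(1)[OF p] by simp
  have "real (card V) ^ 3 = (\<Sum>t\<in>{t\<in>P \<times> P \<times> P. ?R (fst t) (fst (snd t)) (snd (snd t))}. ?w t)
      + (\<Sum>t\<in>{t\<in>P \<times> P \<times> P. \<not> ?R (fst t) (fst (snd t)) (snd (snd t))}. ?w t)"
    using sum_wt_part[OF p] sum_split_pred[OF fI, of ?w "\<lambda>t. ?R (fst t) (fst (snd t)) (snd (snd t))"] by simp
  with a show ?thesis by (simp add: algebra_simps)
qed


lemma wt_ge: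
  assumes "real (card X') \<ge> e * real (card X)" "real (card Y') \<ge> e * real (card Y)"
    "real (card Z') \<ge> e * real (card Z)" "e \<ge> 0"
  shows "wt X' Y' Z' \<ge> e^3 * wt X Y Z"
proof -
  have "e^3 * wt X Y Z = (e * real (card X)) * (e * real (card Y)) * (e * real (card Z))"
    unfolding wt_def by (simp add: power3_eq_cube mult_ac)
  also have "\<dots> \<le> real (card X') * real (card Y') * real (card Z')"
    using assms by (intro mult_mono) auto
  finally show ?thesis unfolding wt_def .
qed

lemma sq_gap:
  assumes "e < \<bar>a - b\<bar>" "(e::real) \<ge> 0"
  shows "e^2 \<le> (b - a)^2"
proof -
  have "e^2 \<le> \<bar>a - b\<bar>^2" using assms by (intro power_mono) auto
  also have "\<dots> = (b - a)^2" by (simp add: power2_commute)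
  finally show ?thesis .
qed

lemma irr_gain:
  assumes p: "part_of FX X" "part_of FY Y" "part_of FZ Z"
    and fx: "FX' \<subseteq> FX" "FY' \<subseteq> FY" "FZ' \<subseteq> FZ"
    and u: "\<Union>FX' = X'" "\<Union>FY' = Y'" "\<Union>FZ' = Z'"
    and c: "real (card X') \<ge> \<epsilon> * real (card X)" "real (card Y') \<ge> \<epsilon> * real (card Y)"
    "real (card Z') \<ge> \<epsilon> * real (card Z)"
    and gap: "\<epsilon> < \<bar>density G X Y Z - density G X' Y' Z'\<bar>"
    and e: "\<epsilon> > 0"
  shows "gsq G X Y Z + \<epsilon>^5 * wt X Y Z \<le> (\<Sum>c\<in>FX \<times> FY \<times> FZ. gsq G (fst c) (fst (snd c)) (snd (snd c)))"
proof -
  have fX: "finite X" "finite Y" "finite Z" using p part_of_finite_set by blast+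
  have sub': "X' \<subseteq> X" "Y' \<subseteq> Y" "Z' \<subseteq> Z"
    using u fx part_ofD(4)[OF p(1)] part_ofD(4)[OF p(2)] part_ofD(4)[OF p(3)] by auto
  have neX: "X \<noteq> {}" "Y \<noteq> {}" "Z \<noteq> {}"
  proof -
    show "X \<noteq> {}"
    proof
      assume "X = {}"
      then have "X' = {}" using sub' by blast
      then have "density G X Y Z = 0" "density G X' Y' Z' = 0" using \<open>X = {}\<close>
        unfolding density_def by simp_all
      then show False using gap e by simp
    qed
    show "Y \<noteq> {}"
    proof
      assume "Y = {}"
      then have "Y' = {}" using sub' by blast
      then have "density G X Y Z = 0" "density G X' Y' Z' = 0" using \<open>Y = {}\<close>
        unfolding density_def by simp_all
      then show False using gap e by simp
    qed
    show "Z \<noteq> {}"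
    proof
      assume "Z = {}"
      then have "Z' = {}" using sub' by blast
      then have "density G X Y Z = 0" "density G X' Y' Z' = 0" using \<open>Z = {}\<close>
        unfolding density_def by simp_all
      then show False using gap e by simp
    qed
  qed
  have cpos: "real (card X) > 0" "real (card Y) > 0" "real (card Z) > 0"
    using fX neX by (simp_all add: card_gt_0_iff)
  have "real (card X') > 0" "real (card Y') > 0" "real (card Z') > 0"
    using c cpos e by (smt (verit) mult_pos_pos)+
  then have ne': "X' \<noteq> {}" "Y' \<noteq> {}" "Z' \<noteq> {}" by auto
  have ne: "FX' \<noteq> {}" "FY' \<noteq> {}" "FZ' \<noteq> {}" using ne' u by auto
  have fX': "finite X'" "finite Y'" "finite Z'" using sub' fX finite_subset by blast+
  have bg: "gsq G X Y Z + wt X' Y' Z' * (Ssum G X' Y' Z' / wt X' Y' Z' - Ssum G X Y Z / wt X Y Z)^2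
         \<le> (\<Sum>c\<in>FX \<times> FY \<times> FZ. gsq G (fst c) (fst (snd c)) (snd (snd c)))"
    using box_gain[OF p fx ne, of G] unfolding u .
  have "\<epsilon>^2 \<le> (density G X' Y' Z' - density G X Y Z)^2" using sq_gap[OF gap] e by simp
  then have g2: "\<epsilon>^2 \<le> (Ssum G X' Y' Z' / wt X' Y' Z' - Ssum G X Y Z / wt X Y Z)^2"
    using density_eq[OF fX] density_eq[OF fX'] by simp
  have w3: "wt X' Y' Z' \<ge> \<epsilon>^3 * wt X Y Z" using wt_ge[OF c] e by simp
  have "\<epsilon>^5 * wt X Y Z = (\<epsilon>^3 * wt X Y Z) * \<epsilon>^2" by (simp add: power_add[symmetric] mult_ac eval_nat_numeral)
  also have "\<dots> \<le> wt X' Y' Z' * (Ssum G X' Y' Z' / wt X' Y' Z' - Ssum G X Y Z / wt X Y Z)^2"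
    using w3 g2 e by (intro mult_mono) (auto simp: wt_def)
  finally show ?thesis using bg by simp
qed


lemma refine_step:
  assumes p: "part_of P V" and V: "verts G = V" and e: "\<epsilon> > 0"
    and nreg: "\<not> eps_regular_partition G \<epsilon> P"
  shows "\<exists>Q. part_of Q V \<and> card Q \<le> card P * 2 ^ (3 * card P ^ 3)
            \<and> energy G P + \<epsilon>^6 * real (card V) ^ 3 \<le> energy G Q"
proof -
  define reg where "reg t \<longleftrightarrow> eps_regular_triple G \<epsilon> (fst t) (fst (snd t)) (snd (snd t))" for t
  define irr where "irr = {t\<in>P \<times> P \<times> P. \<not> reg t}"
  define Pw where "Pw t w \<longleftrightarrow> fst w \<subseteq> fst t \<and> fst (snd w) \<subseteq> fst (snd t) \<and> snd (snd w) \<subseteq> snd (snd t)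
      \<and> real (card (fst w)) \<ge> \<epsilon> * real (card (fst t))
      \<and> real (card (fst (snd w))) \<ge> \<epsilon> * real (card (fst (snd t)))
      \<and> real (card (snd (snd w))) \<ge> \<epsilon> * real (card (snd (snd t)))
      \<and> \<epsilon> < \<bar>density G (fst t) (fst (snd t)) (snd (snd t)) - density G (fst w) (fst (snd w)) (snd (snd w))\<bar>"
    for t w
  define wit where "wit t = (SOME w. Pw t w)" for t
  have witP: "Pw t (wit t)" if "t \<in> irr" for t
  proof -
    have "\<not> reg t" using that unfolding irr_def by blast
    then obtain X' Y' Z' where "X' \<subseteq> fst t" "Y' \<subseteq> fst (snd t)" "Z' \<subseteq> snd (snd t)"
      "real (card X') \<ge> \<epsilon> * real (card (fst t))" "real (card Y') \<ge> \<epsilon> * real (card (fst (snd t)))"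
      "real (card Z') \<ge> \<epsilon> * real (card (snd (snd t)))"
      "\<not> \<bar>density G (fst t) (fst (snd t)) (snd (snd t)) - density G X' Y' Z'\<bar> \<le> \<epsilon>"
      unfolding reg_def eps_regular_triple_def by blast
    then have "Pw t (X', Y', Z')" unfolding Pw_def by simp
    then have "\<exists>w. Pw t w" by blast
    then show ?thesis unfolding wit_def by (rule someI_ex)
  qed
  define Ws where "Ws = (\<lambda>t. fst (wit t)) ` irr \<union> (\<lambda>t. fst (snd (wit t))) ` irr \<union> (\<lambda>t. snd (snd (wit t))) ` irr"
  have fP: "finite P" by (rule part_ofD(1)[OF p])
  have firr: "finite irr" unfolding irr_def using fP by simp
  have cirr: "card irr \<le> card P ^ 3"
  proof -
    have "card irr \<le> card (P \<times> P \<times> P)" unfolding irr_def using fP by (intro card_mono) auto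
    also have "\<dots> = card P ^ 3" by (simp add: card_cartesian_product power3_eq_cube)
    finally show ?thesis .
  qed
  have fWs: "finite Ws" unfolding Ws_def using firr by simp
  have cWs: "card Ws \<le> 3 * card P ^ 3"
  proof -
    have "card Ws \<le> card ((\<lambda>t. fst (wit t)) ` irr) + card ((\<lambda>t. fst (snd (wit t))) ` irr) + card ((\<lambda>t. snd (snd (wit t))) ` irr)"
      unfolding Ws_def by (meson card_Un_le add_le_mono order_trans le_refl)
    also have "\<dots> \<le> card irr + card irr + card irr" by (intro add_mono card_image_le firr)
    finally show ?thesis using cirr by linarith
  qed
  define atm where "atm X = atoms X Ws" for X
  define Q where "Q = \<Union>(atm ` P)"
  have atp: "part_of (atm X) X" if "X \<in> P" for X
    unfolding atm_def by (rule atoms_part[OF part_ofD(2)[OF p that]])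
  have atd: "atm X \<inter> atm Y = {}" if "X \<in> P" "Y \<in> P" "X \<noteq> Y" for X Y
  proof (rule ccontr)
    assume "atm X \<inter> atm Y \<noteq> {}"
    then obtain A where A: "A \<in> atm X" "A \<in> atm Y" by blast
    then have "A \<subseteq> X" "A \<subseteq> Y" "A \<noteq> {}" unfolding atm_def using atoms_sub atoms_ne by blast+
    moreover have "X \<inter> Y = {}" by (rule part_ofD(5)[OF p that])
    ultimately show False by blast
  qed
  have Qp: "part_of Q V"
  proof -
    have "finite Q" unfolding Q_def using fP atp part_ofD(1) by blast
    moreover have "\<forall>A\<in>Q. finite A \<and> A \<noteq> {}"
    proof
      fix A assume "A \<in> Q"
      then obtain X where X: "X \<in> P" "A \<in> atm X" unfolding Q_def by blast
      then show "finite A \<and> A \<noteq> {}" using part_ofD(2,3)[OF atp[OF X(1)]] by blast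
    qed
    moreover have "\<forall>A\<in>Q. \<forall>B\<in>Q. A \<noteq> B \<longrightarrow> A \<inter> B = {}"
    proof (intro ballI impI)
      fix A B assume A: "A \<in> Q" and B: "B \<in> Q" and AB: "A \<noteq> B"
      obtain X where X: "X \<in> P" "A \<in> atm X" using A unfolding Q_def by blast
      obtain Y where Y: "Y \<in> P" "B \<in> atm Y" using B unfolding Q_def by blast
      show "A \<inter> B = {}"
      proof (cases "X = Y")
        case True
        then show ?thesis using part_ofD(5)[OF atp[OF X(1)]] X Y AB by blast
      next
        case False
        have "X \<inter> Y = {}" by (rule part_ofD(5)[OF p X(1) Y(1) False])
        moreover have "A \<subseteq> X" "B \<subseteq> Y" using X Y unfolding atm_def using atoms_sub by blast+
        ultimately show ?thesis by blast
      qed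
    qed
    moreover have "\<Union>Q = V"
    proof -
      have "\<Union>Q = (\<Union>X\<in>P. \<Union>(atm X))" unfolding Q_def by blast
      also have "\<dots> = (\<Union>X\<in>P. X)" unfolding atm_def atoms_Union ..
      also have "\<dots> = V" using part_ofD(4)[OF p] by simp
      finally show ?thesis .
    qed
    ultimately show ?thesis unfolding part_of_def by blast
  qed
  have cQ: "card Q \<le> card P * 2 ^ (3 * card P ^ 3)"
  proof -
    have "card Q \<le> (\<Sum>X\<in>P. card (atm X))" unfolding Q_def by (rule card_UN_le[OF fP])
    also have "\<dots> \<le> (\<Sum>X\<in>P. 2 ^ (3 * card P ^ 3))"
    proof (rule sum_mono)
      fix X assume "X \<in> P"
      have "card (atm X) \<le> 2 ^ card Ws" unfolding atm_def by (rule atoms_card[OF fWs])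
      also have "\<dots> \<le> 2 ^ (3 * card P ^ 3)" using cWs by (intro power_increasing) auto
      finally show "card (atm X) \<le> 2 ^ (3 * card P ^ 3)" .
    qed
    also have "\<dots> = card P * 2 ^ (3 * card P ^ 3)" by simp
    finally show ?thesis .
  qed
  define cells where "cells s = atm (fst s) \<times> atm (fst (snd s)) \<times> atm (snd (snd s))" for s
  define P3 where "P3 = P \<times> P \<times> P"
  let ?g = "\<lambda>c. gsq G (fst c) (fst (snd c)) (snd (snd c))"
  let ?w = "\<lambda>c. wt (fst c) (fst (snd c)) (snd (snd c))"
  have fP3: "finite P3" unfolding P3_def using fP by simp
  have QQQ: "Q \<times> Q \<times> Q = \<Union>(cells ` P3)"
  proof
    show "Q \<times> Q \<times> Q \<subseteq> \<Union>(cells ` P3)"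
    proof
      fix c assume "c \<in> Q \<times> Q \<times> Q"
      then have "fst c \<in> Q" "fst (snd c) \<in> Q" "snd (snd c) \<in> Q" by auto
      then obtain X Y Z where "X \<in> P" "fst c \<in> atm X" "Y \<in> P" "fst (snd c) \<in> atm Y" "Z \<in> P" "snd (snd c) \<in> atm Z"
        unfolding Q_def by blast
      then have "(X,Y,Z) \<in> P3" "c \<in> cells (X,Y,Z)" unfolding P3_def cells_def by (auto simp: mem_Times_iff)
      then show "c \<in> \<Union>(cells ` P3)" by blast
    qed
    show "\<Union>(cells ` P3) \<subseteq> Q \<times> Q \<times> Q"
    proof
      fix c assume "c \<in> \<Union>(cells ` P3)"
      then obtain s where s: "s \<in> P3" "c \<in> cells s" by blast
      then have "fst s \<in> P" "fst (snd s) \<in> P" "snd (snd s) \<in> P" unfolding P3_def by auto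
      moreover have "fst c \<in> atm (fst s)" "fst (snd c) \<in> atm (fst (snd s))" "snd (snd c) \<in> atm (snd (snd s))"
        using s(2) unfolding cells_def by (auto simp: mem_Times_iff)
      ultimately have "fst c \<in> Q" "fst (snd c) \<in> Q" "snd (snd c) \<in> Q" unfolding Q_def by blast+
      then show "c \<in> Q \<times> Q \<times> Q" by (simp add: mem_Times_iff)
    qed
  qed
  have fcells: "\<forall>s\<in>P3. finite (cells s)"
  proof
    fix s assume "s \<in> P3"
    then have m: "fst s \<in> P" "fst (snd s) \<in> P" "snd (snd s) \<in> P" unfolding P3_def by auto
    show "finite (cells s)" unfolding cells_def
      by (intro finite_cartesian_product part_ofD(1)[OF atp[OF m(1)]] part_ofD(1)[OF atp[OF m(2)]] part_ofD(1)[OF atp[OF m(3)]])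
  qed
  have cdisj: "\<forall>s\<in>P3. \<forall>t\<in>P3. s \<noteq> t \<longrightarrow> cells s \<inter> cells t = {}"
  proof (intro ballI impI)
    fix s t assume s: "s \<in> P3" and t: "t \<in> P3" and st: "s \<noteq> t"
    show "cells s \<inter> cells t = {}"
    proof (rule ccontr)
      assume "cells s \<inter> cells t \<noteq> {}"
      then obtain c where c: "c \<in> cells s" "c \<in> cells t" by blast
      have m: "fst s \<in> P" "fst (snd s) \<in> P" "snd (snd s) \<in> P" "fst t \<in> P" "fst (snd t) \<in> P" "snd (snd t) \<in> P"
        using s t unfolding P3_def by auto
      have c1: "fst c \<in> atm (fst s)" "fst c \<in> atm (fst t)" using c unfolding cells_def by (auto simp: mem_Times_iff)
      have c2: "fst (snd c) \<in> atm (fst (snd s))" "fst (snd c) \<in> atm (fst (snd t))" using c unfolding cells_def by (auto simp: mem_Times_iff)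
      have c3: "snd (snd c) \<in> atm (snd (snd s))" "snd (snd c) \<in> atm (snd (snd t))" using c unfolding cells_def by (auto simp: mem_Times_iff)
      have "fst s = fst t" using atd[OF m(1) m(4)] c1 by blast
      moreover have "fst (snd s) = fst (snd t)" using atd[OF m(2) m(5)] c2 by blast
      moreover have "snd (snd s) = snd (snd t)" using atd[OF m(3) m(6)] c3 by blast
      ultimately have "s = t" by (simp add: prod_eq_iff)
      then show False using st by simp
    qed
  qed
  have eQ: "energy G Q = (\<Sum>s\<in>P3. \<Sum>c\<in>cells s. ?g c)"
    unfolding energy_def QQQ by (rule sum.UNION_disjoint[OF fP3 fcells cdisj])
  have eP: "energy G P = (\<Sum>s\<in>P3. ?g s)" unfolding energy_def P3_def ..
  have mono: "?g s \<le> (\<Sum>c\<in>cells s. ?g c)" if "s \<in> P3" for s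
  proof -
    have m: "fst s \<in> P" "fst (snd s) \<in> P" "snd (snd s) \<in> P" using that unfolding P3_def by auto
    show ?thesis unfolding cells_def by (rule box_mono[OF atp[OF m(1)] atp[OF m(2)] atp[OF m(3)]])
  qed
  have gain: "?g s + \<epsilon>^5 * ?w s \<le> (\<Sum>c\<in>cells s. ?g c)" if "s \<in> irr" for s
  proof -
    have sP: "s \<in> P3" using that unfolding irr_def P3_def by blast
    have m: "fst s \<in> P" "fst (snd s) \<in> P" "snd (snd s) \<in> P" using sP unfolding P3_def by auto
    have pw: "Pw s (wit s)" by (rule witP[OF that])
    define X' where "X' = fst (wit s)"
    define Y' where "Y' = fst (snd (wit s))"
    define Z' where "Z' = snd (snd (wit s))"
    have W: "X' \<in> Ws" "Y' \<in> Ws" "Z' \<in> Ws" unfolding Ws_def X'_def Y'_def Z'_def using that by blast+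
    have S: "X' \<subseteq> fst s" "Y' \<subseteq> fst (snd s)" "Z' \<subseteq> snd (snd s)"
      using pw unfolding Pw_def X'_def Y'_def Z'_def by blast+
    have C: "real (card X') \<ge> \<epsilon> * real (card (fst s))" "real (card Y') \<ge> \<epsilon> * real (card (fst (snd s)))"
      "real (card Z') \<ge> \<epsilon> * real (card (snd (snd s)))"
      using pw unfolding Pw_def X'_def Y'_def Z'_def by blast+
    have D: "\<epsilon> < \<bar>density G (fst s) (fst (snd s)) (snd (snd s)) - density G X' Y' Z'\<bar>"
      using pw unfolding Pw_def X'_def Y'_def Z'_def by blast
    have U: "\<Union>{A\<in>atm (fst s). A \<subseteq> X'} = X'" "\<Union>{A\<in>atm (fst (snd s)). A \<subseteq> Y'} = Y'"
      "\<Union>{A\<in>atm (snd (snd s)). A \<subseteq> Z'} = Z'"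
      unfolding atm_def by (rule atoms_sub_Union[OF W(1) S(1)], rule atoms_sub_Union[OF W(2) S(2)], rule atoms_sub_Union[OF W(3) S(3)])
    have "?g s + \<epsilon>^5 * ?w s \<le> (\<Sum>c\<in>atm (fst s) \<times> atm (fst (snd s)) \<times> atm (snd (snd s)). ?g c)"
      by (rule irr_gain[OF atp[OF m(1)] atp[OF m(2)] atp[OF m(3)] _ _ _ U C D e]) auto
    then show ?thesis unfolding cells_def .
  qed
  have irrP3: "irr \<subseteq> P3" unfolding irr_def P3_def by blast
  have "energy G Q - energy G P = (\<Sum>s\<in>P3. (\<Sum>c\<in>cells s. ?g c) - ?g s)"
    unfolding eQ eP by (simp add: sum_subtractf)
  also have "\<dots> \<ge> (\<Sum>s\<in>irr. (\<Sum>c\<in>cells s. ?g c) - ?g s)"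
    using mono by (intro sum_mono2[OF fP3 irrP3]) auto
  finally have i1: "(\<Sum>s\<in>irr. (\<Sum>c\<in>cells s. ?g c) - ?g s) \<le> energy G Q - energy G P" .
  have "(\<Sum>s\<in>irr. \<epsilon>^5 * ?w s) \<le> (\<Sum>s\<in>irr. (\<Sum>c\<in>cells s. ?g c) - ?g s)"
    using gain by (intro sum_mono) fastforce
  moreover have "\<epsilon> * real (card V) ^ 3 < (\<Sum>s\<in>irr. ?w s)"
    using irr_mass[OF p V nreg] unfolding irr_def reg_def .
  then have "\<epsilon>^5 * (\<epsilon> * real (card V) ^ 3) \<le> \<epsilon>^5 * (\<Sum>s\<in>irr. ?w s)"
    using e by (intro mult_left_mono) auto
  ultimately have "\<epsilon>^6 * real (card V) ^ 3 \<le> energy G Q - energy G P"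
    using i1 by (simp add: sum_distrib_left eval_nat_numeral mult_ac)
  then show ?thesis using Qp cQ by (intro exI[of _ Q]) auto
qed


definition Fb :: "nat \<Rightarrow> nat" where "Fb k = k * 2 ^ (3 * k ^ 3)"

lemma Fb_ge: "k \<le> Fb k"
  unfolding Fb_def by simp

lemma Fb_mono: "a \<le> b \<Longrightarrow> Fb a \<le> Fb b"
  unfolding Fb_def by (intro mult_mono power_increasing) auto

lemma part_of_is_partition: "part_of P V \<Longrightarrow> is_partition P V"
  unfolding part_of_def is_partition_def by blast

lemma part_of_single: "finite V \<Longrightarrow> V \<noteq> {} \<Longrightarrow> part_of {V} V"
  unfolding part_of_def by simp

lemma iter:
  assumes f: "finite V" "V \<noteq> {}" and V: "verts G = V" and e: "\<epsilon> > 0"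
  shows "(\<exists>P. part_of P V \<and> card P \<le> (Fb^^j) 1 \<and> eps_regular_partition G \<epsilon> P) \<or>
         (\<exists>P. part_of P V \<and> card P \<le> (Fb^^j) 1 \<and> real j * \<epsilon>^6 * real (card V) ^ 3 \<le> energy G P)"
proof (induction j)
  case 0
  have "part_of {V} V" by (rule part_of_single[OF f])
  moreover have "card {V} \<le> (Fb^^0) 1" by simp
  moreover have "real 0 * \<epsilon>^6 * real (card V) ^ 3 \<le> energy G {V}" using energy_nonneg[of G "{V}"] by simp
  ultimately show ?case by blast
next
  case (Suc j)
  have step: "(Fb^^j) 1 \<le> (Fb^^(Suc j)) 1" using Fb_ge by simp
  show ?case
  proof (cases "\<exists>P. part_of P V \<and> card P \<le> (Fb^^j) 1 \<and> eps_regular_partition G \<epsilon> P")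
    case True
    then show ?thesis using step by (meson order_trans)
  next
    case False
    then obtain P where P: "part_of P V" "card P \<le> (Fb^^j) 1" "real j * \<epsilon>^6 * real (card V) ^ 3 \<le> energy G P"
      using Suc.IH by blast
    show ?thesis
    proof (cases "eps_regular_partition G \<epsilon> P")
      case True
      then show ?thesis using P step by (meson order_trans)
    next
      case nr: False
      obtain Q where Q: "part_of Q V" "card Q \<le> card P * 2 ^ (3 * card P ^ 3)"
        "energy G P + \<epsilon>^6 * real (card V) ^ 3 \<le> energy G Q"
        using refine_step[OF P(1) V e nr] by blast
      have "card Q \<le> Fb (card P)" using Q(2) unfolding Fb_def .
      also have "\<dots> \<le> Fb ((Fb^^j) 1)" by (rule Fb_mono[OF P(2)])
      also have "\<dots> = (Fb^^(Suc j)) 1" by simp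
      finally have cQ: "card Q \<le> (Fb^^(Suc j)) 1" .
      have "real (Suc j) * \<epsilon>^6 * real (card V) ^ 3 = real j * \<epsilon>^6 * real (card V) ^ 3 + \<epsilon>^6 * real (card V) ^ 3"
        by (simp add: algebra_simps)
      also have "\<dots> \<le> energy G Q" using P(3) Q(3) by linarith
      finally show ?thesis using Q(1) cQ by blast
    qed
  qed
qed

definition regbound :: "real \<Rightarrow> nat" where
  "regbound \<epsilon> = (Fb^^(nat \<lceil>1 / \<epsilon>^6\<rceil> + 1)) 1"

lemma reg_exists:
  assumes f: "finite V" "V \<noteq> {}" and V: "verts G = V" and e: "\<epsilon> > 0"
  shows "\<exists>P. is_partition P V \<and> card P \<le> regbound \<epsilon> \<and> eps_regular_partition G \<epsilon> P"
proof -
  define j where "j = nat \<lceil>1 / \<epsilon>^6\<rceil> + 1"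
  have e6: "\<epsilon>^6 > 0" using e by simp
  have "real j > 1 / \<epsilon>^6" unfolding j_def by linarith
  then have j1: "real j * \<epsilon>^6 > 1" using e6 by (simp add: divide_less_eq)
  have N: "real (card V) ^ 3 > 0" using f by (simp add: card_gt_0_iff)
  have "\<not> (\<exists>P. part_of P V \<and> card P \<le> (Fb^^j) 1 \<and> real j * \<epsilon>^6 * real (card V) ^ 3 \<le> energy G P)"
  proof
    assume "\<exists>P. part_of P V \<and> card P \<le> (Fb^^j) 1 \<and> real j * \<epsilon>^6 * real (card V) ^ 3 \<le> energy G P"
    then obtain P where P: "part_of P V" "real j * \<epsilon>^6 * real (card V) ^ 3 \<le> energy G P" by blast
    have "energy G P \<le> real (card V) ^ 3" by (rule energy_le[OF P(1)])
    moreover have "real (card V) ^ 3 < real j * \<epsilon>^6 * real (card V) ^ 3" using j1 N by simp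
    ultimately show False using P(2) by linarith
  qed
  then obtain P where "part_of P V" "card P \<le> (Fb^^j) 1" "eps_regular_partition G \<epsilon> P"
    using iter[OF f V e, of j] by blast
  then show ?thesis unfolding regbound_def j_def using part_of_is_partition by blast
qed

lemma hered_3graph: "hereditary H \<Longrightarrow> G \<in> H \<Longrightarrow> is_3graph G"
  unfolding hereditary_def by blast

lemma reg_bound_works:
  assumes h: "hereditary H" and e: "\<epsilon> > 0"
  shows "bound_works eps_regular_partition H \<epsilon> (regbound \<epsilon>)"
  unfolding bound_works_def
proof (intro exI[of _ 1] ballI impI)
  fix G assume G: "G \<in> H" "1 \<le> card (verts G)"
  have f: "finite (verts G)" using hered_3graph[OF h G(1)] unfolding is_3graph_def by blast
  have ne: "verts G \<noteq> {}" using G(2) by auto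
  show "\<exists>P. is_partition P (verts G) \<and> card P \<le> regbound \<epsilon> \<and> eps_regular_partition G \<epsilon> P"
    by (rule reg_exists[OF f ne refl e])
qed


lemma density_01:
  assumes "finite X" "finite Y" "finite Z"
  shows "0 \<le> density G X Y Z" "density G X Y Z \<le> 1"
proof -
  have d: "density G X Y Z = Ssum G X Y Z / wt X Y Z" by (rule density_eq[OF assms])
  have "Ssum G X Y Z \<ge> 0" by (rule Ssum_nonneg)
  moreover have "Ssum G X Y Z \<le> wt X Y Z" by (rule Ssum_le_wt[OF assms])
  ultimately show "0 \<le> density G X Y Z" "density G X Y Z \<le> 1" unfolding d
    by (auto simp: divide_le_eq_1)
qed

lemma hom_imp_reg_triple:
  assumes f: "finite X" "finite Y" "finite Z" and ne: "X \<noteq> {}" "Y \<noteq> {}" "Z \<noteq> {}"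
    and e: "\<epsilon> > 0" and h: "eps_homogeneous_triple G (\<epsilon>^4) X Y Z"
  shows "eps_regular_triple G \<epsilon> X Y Z"
  unfolding eps_regular_triple_def
proof (intro allI impI)
  fix X' Y' Z' assume a: "X' \<subseteq> X \<and> Y' \<subseteq> Y \<and> Z' \<subseteq> Z \<and>
        real (card X') \<ge> \<epsilon> * real (card X) \<and> real (card Y') \<ge> \<epsilon> * real (card Y) \<and>
        real (card Z') \<ge> \<epsilon> * real (card Z)"
  have f': "finite X'" "finite Y'" "finite Z'" using a f finite_subset by blast+
  let ?d = "density G X Y Z" and ?d' = "density G X' Y' Z'"
  have r: "0 \<le> ?d" "?d \<le> 1" "0 \<le> ?d'" "?d' \<le> 1"
    using density_01[OF f, of G] density_01[OF f', of G] by simp_all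
  show "\<bar>?d - ?d'\<bar> \<le> \<epsilon>"
  proof (cases "\<epsilon> \<ge> 1")
    case True then show ?thesis using r by linarith
  next
    case False
    then have e1: "\<epsilon> < 1" by simp
    have e4: "\<epsilon>^4 \<le> \<epsilon>"
    proof -
      have "\<epsilon>^4 \<le> \<epsilon>^1" using e e1 by (intro power_decreasing) auto
      then show ?thesis by simp
    qed
    have wp: "wt X Y Z > 0" by (rule wt_pos[OF f ne])
    have e3: "\<epsilon>^3 > 0" using e by simp
    have w3: "wt X' Y' Z' \<ge> \<epsilon>^3 * wt X Y Z" using wt_ge[of \<epsilon> X X' Y Y' Z Z'] a e by simp
    have w'p: "wt X' Y' Z' > 0" using w3 wp e3 by (smt (verit) mult_pos_pos)
    have dd: "?d = Ssum G X Y Z / wt X Y Z" by (rule density_eq[OF f])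
    have dd': "?d' = Ssum G X' Y' Z' / wt X' Y' Z'" by (rule density_eq[OF f'])
    have sub: "X' \<subseteq> X" "Y' \<subseteq> Y" "Z' \<subseteq> Z" using a by blast+
    from h consider (lo) "?d < \<epsilon>^4" | (hi) "1 - \<epsilon>^4 < ?d"
      unfolding eps_homogeneous_triple_def Let_def by linarith
    then show ?thesis
    proof cases
      case lo
      have S: "Ssum G X' Y' Z' \<le> Ssum G X Y Z" by (rule Ssum_mono[OF f sub])
      have "?d' \<le> Ssum G X Y Z / (\<epsilon>^3 * wt X Y Z)"
        unfolding dd' using S w3 Ssum_nonneg[of G X' Y' Z'] e3 wp
        by (intro frac_le) (auto intro: mult_pos_pos)
      also have "\<dots> = ?d / \<epsilon>^3" unfolding dd by simp
      also have "\<dots> < \<epsilon>^4 / \<epsilon>^3" using lo e3 by (simp add: divide_strict_right_mono)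
      also have "\<dots> = \<epsilon>" using e by (simp add: eval_nat_numeral field_simps)
      finally have "?d' < \<epsilon>" .
      then show ?thesis using r lo e4 by linarith
    next
      case hi
      have S: "wt X' Y' Z' - Ssum G X' Y' Z' \<le> wt X Y Z - Ssum G X Y Z" by (rule coSsum_mono[OF f sub])
      have "1 - ?d' = (wt X' Y' Z' - Ssum G X' Y' Z') / wt X' Y' Z'" unfolding dd' using w'p by (simp add: field_simps)
      also have "\<dots> \<le> (wt X Y Z - Ssum G X Y Z) / (\<epsilon>^3 * wt X Y Z)"
        using S w3 e3 wp Ssum_le_wt[OF f', of G] Ssum_le_wt[OF f, of G] by (intro frac_le) (auto intro: mult_pos_pos)
      also have "\<dots> = (1 - ?d) / \<epsilon>^3" unfolding dd using wp by (simp add: field_simps)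
      also have "\<dots> < \<epsilon>^4 / \<epsilon>^3" using hi e3 by (simp add: divide_strict_right_mono)
      also have "\<dots> = \<epsilon>" using e by (simp add: eval_nat_numeral field_simps)
      finally have "1 - ?d' < \<epsilon>" .
      then show ?thesis using r hi e4 by linarith
    qed
  qed
qed

lemma hom_imp_reg_partition:
  assumes p: "part_of P V" and V: "verts G = V" and e: "\<epsilon> > 0"
    and h: "eps_homogeneous_partition G (\<epsilon>^4) P"
  shows "eps_regular_partition G \<epsilon> P"
proof -
  let ?Ch = "{(x,y,z). \<exists>X\<in>P. \<exists>Y\<in>P. \<exists>Z\<in>P. eps_homogeneous_triple G (\<epsilon>^4) X Y Z \<and> x \<in> X \<and> y \<in> Y \<and> z \<in> Z}"
  let ?Cr = "{(x,y,z). \<exists>X\<in>P. \<exists>Y\<in>P. \<exists>Z\<in>P. eps_regular_triple G \<epsilon> X Y Z \<and> x \<in> X \<and> y \<in> Y \<and> z \<in> Z}"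
  have fV: "finite V" by (rule part_of_finite_set[OF p])
  have sub: "?Ch \<subseteq> ?Cr"
  proof
    fix t assume "t \<in> ?Ch"
    then obtain x y z X Y Z where t: "t = (x,y,z)" "X \<in> P" "Y \<in> P" "Z \<in> P"
      "eps_homogeneous_triple G (\<epsilon>^4) X Y Z" "x \<in> X" "y \<in> Y" "z \<in> Z" by blast
    have "eps_regular_triple G \<epsilon> X Y Z"
      using part_ofD(2,3)[OF p] t(2-5) e by (intro hom_imp_reg_triple) auto
    then show "t \<in> ?Cr" using t by blast
  qed
  have "?Cr \<subseteq> V \<times> V \<times> V" using part_ofD(4)[OF p] by blast
  moreover have "finite (V \<times> V \<times> V)" using fV by simp
  ultimately have fin: "finite ?Cr" by (rule finite_subset)
  have c1: "real (card ?Ch) \<le> real (card ?Cr)" using card_mono[OF fin sub] by simp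
  have c0: "(1 - \<epsilon>^4) * real (card V) ^ 3 \<le> real (card ?Ch)"
    using h V unfolding eps_homogeneous_partition_def good_partition_def by simp
  have "(1 - \<epsilon>) * real (card V) ^ 3 \<le> real (card ?Cr)"
  proof (cases "\<epsilon> \<le> 1")
    case True
    have "\<epsilon>^4 \<le> \<epsilon>^1" using e True by (intro power_decreasing) auto
    then have "(1 - \<epsilon>) * real (card V) ^ 3 \<le> (1 - \<epsilon>^4) * real (card V) ^ 3"
      by (intro mult_right_mono) auto
    then show ?thesis using c0 c1 by linarith
  next
    case False
    then have "(1 - \<epsilon>) * real (card V) ^ 3 \<le> 0" by (intro mult_nonpos_nonneg) auto
    then show ?thesis by (smt (verit) of_nat_0_le_iff)
  qed
  then show ?thesis unfolding eps_regular_partition_def good_partition_def using V by simp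
qed

lemma hom_bound_imp_reg_bound:
  assumes hH: "hereditary H" and e: "\<epsilon> > 0"
    and b: "bound_works eps_homogeneous_partition H (\<epsilon>^4) M"
  shows "bound_works eps_regular_partition H \<epsilon> M"
proof -
  obtain N where N: "\<forall>G\<in>H. card (verts G) \<ge> N \<longrightarrow>
      (\<exists>P. is_partition P (verts G) \<and> card P \<le> M \<and> eps_homogeneous_partition G (\<epsilon>^4) P)"
    using b unfolding bound_works_def by blast
  show ?thesis unfolding bound_works_def
  proof (intro exI[of _ N] ballI impI)
    fix G assume G: "G \<in> H" "N \<le> card (verts G)"
    obtain P where P: "is_partition P (verts G)" "card P \<le> M" "eps_homogeneous_partition G (\<epsilon>^4) P"
      using N G by blast
    have f: "finite (verts G)" using hered_3graph[OF hH G(1)] unfolding is_3graph_def by blast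
    have "eps_regular_partition G \<epsilon> P"
      by (rule hom_imp_reg_partition[OF part_of_partition[OF P(1) f] refl e P(3)])
    then show "\<exists>P. is_partition P (verts G) \<and> card P \<le> M \<and> eps_regular_partition G \<epsilon> P"
      using P by blast
  qed
qed

lemma part2:
  assumes hH: "hereditary H" and d: "M_hom_defined H" and e: "\<epsilon> > 0"
  shows "M_reg H \<epsilon> \<le> M_hom H (\<epsilon> ^ 4)"
proof -
  have "\<exists>M. bound_works eps_homogeneous_partition H (\<epsilon>^4) M" using d e unfolding M_hom_defined_def by simp
  then have "bound_works eps_homogeneous_partition H (\<epsilon>^4) (M_hom H (\<epsilon>^4))"
    unfolding M_hom_def by (rule LeastI_ex)
  then have "bound_works eps_regular_partition H \<epsilon> (M_hom H (\<epsilon>^4))"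
    by (rule hom_bound_imp_reg_bound[OF hH e])
  then show ?thesis unfolding M_reg_def by (rule Least_le)
qed


lemma hg_iso_sym: "hg_iso G H \<Longrightarrow> hg_iso H G"
proof -
  assume "hg_iso G H"
  then obtain f where f: "bij_betw f (verts G) (verts H)"
    and e: "\<forall>e. e \<subseteq> verts G \<longrightarrow> (e \<in> edges G \<longleftrightarrow> f ` e \<in> edges H)"
    unfolding hg_iso_def by blast
  define g where "g = inv_into (verts G) f"
  have g: "bij_betw g (verts H) (verts G)" unfolding g_def by (rule bij_betw_inv_into[OF f])
  have "\<forall>e. e \<subseteq> verts H \<longrightarrow> (e \<in> edges H \<longleftrightarrow> g ` e \<in> edges G)"
  proof (intro allI impI)
    fix e assume eH: "e \<subseteq> verts H"
    have sub: "g ` e \<subseteq> verts G" using g eH bij_betw_imp_surj_on by blast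
    have "f ` (g ` e) = e" unfolding g_def
      using eH f by (simp add: bij_betw_def image_inv_into_cancel)
    then show "e \<in> edges H \<longleftrightarrow> g ` e \<in> edges G" using e sub by metis
  qed
  then show ?thesis unfolding hg_iso_def using g by blast
qed

lemma hg_iso_trans: "hg_iso G H \<Longrightarrow> hg_iso H K \<Longrightarrow> hg_iso G K"
proof -
  assume "hg_iso G H" "hg_iso H K"
  then obtain f g where f: "bij_betw f (verts G) (verts H)"
    and ef: "\<forall>e. e \<subseteq> verts G \<longrightarrow> (e \<in> edges G \<longleftrightarrow> f ` e \<in> edges H)"
    and g: "bij_betw g (verts H) (verts K)"
    and eg: "\<forall>e. e \<subseteq> verts H \<longrightarrow> (e \<in> edges H \<longleftrightarrow> g ` e \<in> edges K)"
    unfolding hg_iso_def by blast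
  have "bij_betw (g \<circ> f) (verts G) (verts K)" by (rule bij_betw_trans[OF f g])
  moreover have "\<forall>e. e \<subseteq> verts G \<longrightarrow> (e \<in> edges G \<longleftrightarrow> (g \<circ> f) ` e \<in> edges K)"
  proof (intro allI impI)
    fix e assume eG: "e \<subseteq> verts G"
    have "f ` e \<subseteq> verts H" using eG f bij_betw_imp_surj_on by blast
    then show "e \<in> edges G \<longleftrightarrow> (g \<circ> f) ` e \<in> edges K" using ef eG eg by (simp add: image_comp)
  qed
  ultimately show ?thesis unfolding hg_iso_def by blast
qed

lemma canon:
  assumes "is_3graph G"
  shows "\<exists>G'. hg_iso G G' \<and> verts G' \<subseteq> {0..<card (verts G)} \<and> edges G' \<subseteq> Pow {0..<card (verts G)}"
proof -
  have fin: "finite (verts G)" and eV: "\<forall>e\<in>edges G. e \<subseteq> verts G"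
    using assms unfolding is_3graph_def by auto
  obtain h where h: "bij_betw h (verts G) {0..<card (verts G)}" using ex_bij_betw_finite_nat[OF fin] by blast
  define G' where "G' = ({0..<card (verts G)}, (\<lambda>e. h ` e) ` edges G)"
  have vG': "verts G' = {0..<card (verts G)}" unfolding G'_def verts_def by simp
  have eG': "edges G' = (\<lambda>e. h ` e) ` edges G" unfolding G'_def edges_def by simp
  have inj: "inj_on h (verts G)" using h bij_betw_def by blast
  have "\<forall>e. e \<subseteq> verts G \<longrightarrow> (e \<in> edges G \<longleftrightarrow> h ` e \<in> edges G')"
  proof (intro allI impI iffI)
    fix e assume "e \<subseteq> verts G" "e \<in> edges G"
    then show "h ` e \<in> edges G'" unfolding eG' by blast
  next
    fix e assume e: "e \<subseteq> verts G" "h ` e \<in> edges G'"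
    then obtain e0 where e0: "e0 \<in> edges G" "h ` e = h ` e0" unfolding eG' by blast
    have "e0 \<subseteq> verts G" using eV e0(1) by blast
    then have "e = e0" using inj_on_image_eq_iff[OF inj e(1)] e0(2) by blast
    then show "e \<in> edges G" using e0 by simp
  qed
  then have "hg_iso G G'" unfolding hg_iso_def using h vG' by (intro exI[of _ h]) simp
  moreover have "edges G' \<subseteq> Pow {0..<card (verts G)}"
  proof
    fix x assume "x \<in> edges G'"
    then obtain e0 where "e0 \<in> edges G" "x = h ` e0" unfolding eG' by blast
    then have "x \<subseteq> h ` verts G" using eV by blast
    then show "x \<in> Pow {0..<card (verts G)}" using h bij_betw_imp_surj_on by blast
  qed
  ultimately show ?thesis using vG' by blast
qed

lemma large_in_S:
  assumes inf: "infinite S" and S3: "\<forall>G\<in>S. is_3graph G"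
    and ni: "\<forall>G\<in>S. \<forall>G'\<in>S. G \<noteq> G' \<longrightarrow> \<not> hg_iso G G'"
  shows "\<exists>G\<in>S. card (verts G) \<ge> m"
proof (rule ccontr)
  assume "\<not> (\<exists>G\<in>S. card (verts G) \<ge> m)"
  then have small: "\<forall>G\<in>S. card (verts G) < m" by auto
  define c where "c G = (SOME G'. hg_iso G G' \<and> verts G' \<subseteq> {0..<card (verts G)} \<and> edges G' \<subseteq> Pow {0..<card (verts G)})" for G
  have cP: "hg_iso G (c G) \<and> verts (c G) \<subseteq> {0..<card (verts G)} \<and> edges (c G) \<subseteq> Pow {0..<card (verts G)}"
    if "G \<in> S" for G
    unfolding c_def by (rule someI_ex[OF canon]) (use S3 that in blast)
  have "c ` S \<subseteq> Pow {0..<m} \<times> Pow (Pow {0..<m})"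
  proof
    fix x assume "x \<in> c ` S"
    then obtain G where G: "G \<in> S" "x = c G" by blast
    have "{0..<card (verts G)} \<subseteq> {0..<m}" using small G(1) by auto
    then have "verts x \<subseteq> {0..<m}" "edges x \<subseteq> Pow {0..<m}" using cP[OF G(1)] G(2) by blast+
    then show "x \<in> Pow {0..<m} \<times> Pow (Pow {0..<m})" unfolding verts_def edges_def by (cases x) auto
  qed
  then have fc: "finite (c ` S)" by (rule finite_subset) simp
  have "inj_on c S"
  proof (rule inj_onI)
    fix G G' assume G: "G \<in> S" "G' \<in> S" "c G = c G'"
    have "hg_iso G (c G)" "hg_iso G' (c G')" using cP G by blast+
    then have "hg_iso G G'" using G(3) hg_iso_sym hg_iso_trans by metis
    then show "G = G'" using ni G by blast
  qed
  then have "finite S" using fc finite_imageD by blast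
  then show False using inf by simp
qed


lemma density_const:
  assumes f: "finite X" "finite Y" "finite Z" and ne: "X \<noteq> {}" "Y \<noteq> {}" "Z \<noteq> {}"
    and c: "\<forall>x\<in>X. \<forall>y\<in>Y. \<forall>z\<in>Z. ({x,y,z} \<in> edges G \<longleftrightarrow> Q)"
  shows "density G X Y Z = (if Q then 1 else 0)"
proof -
  have "Ssum G X Y Z = (\<Sum>x\<in>X. \<Sum>y\<in>Y. \<Sum>z\<in>Z. (if Q then 1 else 0))"
    unfolding Ssum_def ind_def using c by (intro sum.cong refl) auto
  also have "\<dots> = (if Q then wt X Y Z else 0)" unfolding wt_def by simp
  finally have "Ssum G X Y Z = (if Q then wt X Y Z else 0)" .
  moreover have "wt X Y Z > 0" by (rule wt_pos[OF f ne])
  ultimately show ?thesis unfolding density_eq[OF f] by simp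
qed

lemma major_part:
  assumes p: "part_of P W" and F: "F \<subseteq> W" and ne: "P \<noteq> {}"
  shows "\<exists>X\<in>P. card (F \<inter> X) * card P \<ge> card F"
proof (rule ccontr)
  assume "\<not> (\<exists>X\<in>P. card (F \<inter> X) * card P \<ge> card F)"
  then have lt: "\<forall>X\<in>P. card (F \<inter> X) * card P < card F" by auto
  have fP: "finite P" by (rule part_ofD(1)[OF p])
  have "F = (\<Union>X\<in>P. F \<inter> X)" using F part_ofD(4)[OF p] by blast
  then have "card F \<le> (\<Sum>X\<in>P. card (F \<inter> X))" using card_UN_le[OF fP, of "\<lambda>X. F \<inter> X"] by simp
  then have "card F * card P \<le> (\<Sum>X\<in>P. card (F \<inter> X)) * card P" by (rule mult_right_mono) simp
  also have "\<dots> = (\<Sum>X\<in>P. card (F \<inter> X) * card P)" by (simp add: sum_distrib_right)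
  also have "\<dots> < (\<Sum>X\<in>P. card F)" using lt fP ne by (intro sum_strict_mono) auto
  also have "\<dots> = card F * card P" by simp
  finally show False by simp
qed

lemma pigeon3:
  assumes fP: "finite P" and fA: "finite A" and m: "\<forall>a\<in>A. pm a \<in> P" and c: "card A > 2 * card P"
  shows "\<exists>X\<in>P. card {a\<in>A. pm a = X} \<ge> 3"
proof (rule ccontr)
  assume "\<not> (\<exists>X\<in>P. card {a\<in>A. pm a = X} \<ge> 3)"
  then have le: "\<forall>X\<in>P. card {a\<in>A. pm a = X} \<le> 2" by auto
  have "A = (\<Union>X\<in>P. {a\<in>A. pm a = X})" using m by blast
  then have "card A \<le> (\<Sum>X\<in>P. card {a\<in>A. pm a = X})" using card_UN_le[OF fP, of "\<lambda>X. {a\<in>A. pm a = X}"] by simp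
  also have "\<dots> \<le> (\<Sum>X\<in>P. 2)" using le by (intro sum_mono) auto
  also have "\<dots> = 2 * card P" by simp
  finally show False using c by simp
qed

lemma three_distinct:
  assumes "card T \<ge> 3"
  shows "\<exists>a b c. a \<in> T \<and> b \<in> T \<and> c \<in> T \<and> a \<noteq> b \<and> a \<noteq> c \<and> b \<noteq> c"
proof -
  obtain T' where "T' \<subseteq> T" "card T' = 3" using obtain_subset_with_card_n[OF assms] by metis
  then show ?thesis unfolding card_3_iff by blast
qed

lemma mass_bound:
  assumes p: "part_of P W" and V: "verts B = W" and good: "eps_regular_partition B \<epsilon> P"
    and m: "X \<in> P" "Y \<in> P" "Z \<in> P" and nr: "\<not> eps_regular_triple B \<epsilon> X Y Z"
  shows "wt X Y Z \<le> \<epsilon> * real (card W) ^ 3"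
proof -
  let ?C = "{(x,y,z). \<exists>X\<in>P. \<exists>Y\<in>P. \<exists>Z\<in>P. eps_regular_triple B \<epsilon> X Y Z \<and> x \<in> X \<and> y \<in> Y \<and> z \<in> Z}"
  have fW: "finite W" by (rule part_of_finite_set[OF p])
  have sX: "X \<subseteq> W" "Y \<subseteq> W" "Z \<subseteq> W" using m part_ofD(4)[OF p] by blast+
  have sub: "?C \<subseteq> (W \<times> W \<times> W) - (X \<times> Y \<times> Z)"
  proof
    fix t assume "t \<in> ?C"
    then obtain x y z X' Y' Z' where t: "t = (x,y,z)" "X' \<in> P" "Y' \<in> P" "Z' \<in> P"
      "eps_regular_triple B \<epsilon> X' Y' Z'" "x \<in> X'" "y \<in> Y'" "z \<in> Z'" by blast
    have inW: "t \<in> W \<times> W \<times> W" using t part_ofD(4)[OF p] by blast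
    have "t \<notin> X \<times> Y \<times> Z"
    proof
      assume "t \<in> X \<times> Y \<times> Z"
      then have xyz: "x \<in> X" "y \<in> Y" "z \<in> Z" using t(1) by auto
      have "X' = X" using part_ofD(5)[OF p t(2) m(1)] xyz t(6) by blast
      moreover have "Y' = Y" using part_ofD(5)[OF p t(3) m(2)] xyz t(7) by blast
      moreover have "Z' = Z" using part_ofD(5)[OF p t(4) m(3)] xyz t(8) by blast
      ultimately show False using t(5) nr by simp
    qed
    then show "t \<in> (W \<times> W \<times> W) - (X \<times> Y \<times> Z)" using inW by blast
  qed
  have fWWW: "finite (W \<times> W \<times> W)" using fW by simp
  have sXYZ: "X \<times> Y \<times> Z \<subseteq> W \<times> W \<times> W" using sX by blast
  have fXYZ: "finite (X \<times> Y \<times> Z)" using finite_subset[OF sXYZ fWWW] .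
  have "card ?C \<le> card ((W \<times> W \<times> W) - (X \<times> Y \<times> Z))" by (rule card_mono[OF _ sub]) (use fWWW in simp)
  also have "\<dots> = card (W \<times> W \<times> W) - card (X \<times> Y \<times> Z)" by (rule card_Diff_subset[OF fXYZ sXYZ])
  finally have c1: "card ?C \<le> card (W \<times> W \<times> W) - card (X \<times> Y \<times> Z)" .
  have c2: "card (X \<times> Y \<times> Z) \<le> card (W \<times> W \<times> W)" by (rule card_mono[OF fWWW sXYZ])
  have "real (card ?C) \<le> real (card (W \<times> W \<times> W)) - real (card (X \<times> Y \<times> Z))" using c1 c2 by linarith
  moreover have "real (card (W \<times> W \<times> W)) = real (card W) ^ 3" by (simp add: card_cartesian_product power3_eq_cube)
  moreover have "real (card (X \<times> Y \<times> Z)) = wt X Y Z" unfolding wt_def by (simp add: card_cartesian_product)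
  moreover have "(1 - \<epsilon>) * real (card W) ^ 3 \<le> real (card ?C)"
    using good V unfolding eps_regular_partition_def good_partition_def by simp
  ultimately show ?thesis by (simp add: algebra_simps)
qed


lemma arith1:
  fixes k u K :: nat and \<epsilon> :: real
  assumes "k \<ge> 1" "u \<ge> 1" "k < K" "u \<le> 2*K + 8*K^2" "1000 * real K ^ 9 * \<epsilon> \<le> 1" "\<epsilon> > 0"
  shows "\<epsilon> * (real k * real u)^3 < 1"
proof -
  have K1: "K \<ge> 1" using assms by simp
  have "u \<le> 10 * K^2"
  proof -
    have "2*K \<le> 2*K^2" using K1 by (simp add: power2_eq_square)
    then show ?thesis using assms(4) by linarith
  qed
  then have u10: "real u \<le> 10 * real K ^ 2" by (metis of_nat_le_iff of_nat_mult of_nat_numeral of_nat_power)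
  have kK: "real k < real K" using assms(3) by simp
  have "real k * real u \<le> real k * (10 * real K ^ 2)" using u10 by (intro mult_left_mono) auto
  also have "\<dots> < real K * (10 * real K ^ 2)" using kK K1 by (intro mult_strict_right_mono) auto
  also have "\<dots> = 10 * real K ^ 3" by (simp add: power2_eq_square power3_eq_cube)
  finally have "real k * real u < 10 * real K ^ 3" .
  moreover have "0 \<le> real k * real u" by simp
  ultimately have "(real k * real u)^3 < (10 * real K ^ 3)^3" by (rule power_strict_mono) simp
  also have "\<dots> = 1000 * real K ^ 9" by (simp add: power_mult_distrib power_mult[symmetric])
  finally have "\<epsilon> * (real k * real u)^3 < \<epsilon> * (1000 * real K ^ 9)" using assms(6) by simp
  then show ?thesis using assms(5) by (simp add: mult_ac)
qed

lemma arith2: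
  fixes a k n u cX :: real
  assumes "a * k \<ge> n" "cX \<le> u * n" "\<epsilon> * (k * u)^3 < 1" "k * u \<ge> 1" "k > 0" "\<epsilon> > 0" "n \<ge> 0"
  shows "\<epsilon> * cX \<le> a"
proof -
  have "k * u \<le> (k * u)^3"
  proof -
    have "(k*u)^1 \<le> (k*u)^3" using assms(4) by (intro power_increasing) auto
    then show ?thesis by simp
  qed
  then have eku: "\<epsilon> * (k * u) \<le> 1" using assms(3,6) by (smt (verit) mult_left_mono)
  have "\<epsilon> * cX * k \<le> \<epsilon> * (u * n) * k" using assms by (intro mult_right_mono mult_left_mono) auto
  also have "\<dots> = (\<epsilon> * (k * u)) * n" by (simp add: mult_ac)
  also have "\<dots> \<le> 1 * n" using eku assms(7) by (intro mult_right_mono) auto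
  also have "\<dots> \<le> a * k" using assms(1) by simp
  finally show ?thesis using assms(5) by simp
qed

lemma arith3:
  fixes a b c k n u A B C :: real
  assumes "a * k \<ge> n" "b * k \<ge> n" "c * k \<ge> n" "a \<le> A" "b \<le> B" "c \<le> C"
    "A * B * C \<le> \<epsilon> * (u * n)^3" "n > 0" "k > 0" "a \<ge> 0" "b \<ge> 0" "c \<ge> 0"
  shows "1 \<le> \<epsilon> * (k * u)^3"
proof -
  have "n * n * n \<le> (a * k) * (b * k) * (c * k)" using assms by (intro mult_mono) auto
  also have "\<dots> = (a * b * c) * k^3" by (simp add: power3_eq_cube mult_ac)
  also have "\<dots> \<le> (A * B * C) * k^3" using assms by (intro mult_right_mono mult_mono) auto
  also have "\<dots> \<le> \<epsilon> * (u * n)^3 * k^3" using assms by (intro mult_right_mono) auto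
  also have "\<dots> = (\<epsilon> * (k * u)^3) * (n * n * n)" by (simp add: power3_eq_cube mult_ac)
  finally have "1 * (n * n * n) \<le> (\<epsilon> * (k * u)^3) * (n * n * n)" by simp
  then show ?thesis using assms(8) by (simp add: mult_le_cancel_right)
qed


lemma natle: "(c::nat) \<le> a * b \<Longrightarrow> real c \<le> real a * real b"
proof -
  assume "c \<le> a * b"
  then have "real c \<le> real (a * b)" by (simp only: of_nat_le_iff)
  then show ?thesis by simp
qed

lemma hg_equiv_refl: "hg_equiv G a a"
  unfolding hg_equiv_def by simp

lemma not_equiv_wit:
  assumes "\<not> hg_equiv G a b"
  shows "\<exists>w. fst w \<in> verts G - {a,b} \<and> snd w \<in> verts G - {a,b} \<and>
            \<not> ({a, fst w, snd w} \<in> edges G \<longleftrightarrow> {b, fst w, snd w} \<in> edges G)"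
proof -
  obtain z1 z2 where "z1 \<in> verts G - {a,b}" "z2 \<in> verts G - {a,b}"
    "\<not> ({a, z1, z2} \<in> edges G \<longleftrightarrow> {b, z1, z2} \<in> edges G)"
    using assms unfolding hg_equiv_def by blast
  then show ?thesis by (intro exI[of _ "(z1,z2)"]) simp
qed

lemma lower_main:
  assumes hH: "hereditary H" and GB: "G \<in> B_set H" and cG: "card (verts G) \<ge> 2*K" and K1: "K \<ge> 1"
    and e: "\<epsilon> > 0" "\<epsilon> < 1/2" and eK: "1000 * real K ^ 9 * \<epsilon> \<le> 1" and MK: "M < K"
  shows "\<not> bound_works eps_regular_partition H \<epsilon> M"
proof
  assume "bound_works eps_regular_partition H \<epsilon> M"
  then obtain N0 where N0: "\<forall>B\<in>H. card (verts B) \<ge> N0 \<longrightarrow>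
      (\<exists>P. is_partition P (verts B) \<and> card P \<le> M \<and> eps_regular_partition B \<epsilon> P)"
    unfolding bound_works_def by blast
  have G3: "is_3graph G" and irr: "irreducible G" and bl: "\<forall>n\<ge>1. \<exists>B\<in>H. is_blowup n G B"
    using GB unfolding B_set_def by blast+
  have fVG: "finite (verts G)" using G3 unfolding is_3graph_def by blast
  have e3: "\<forall>e\<in>edges G. card e = 3" using G3 unfolding is_3graph_def by blast
  obtain A where A: "A \<subseteq> verts G" "card A = 2*K" "finite A"
    using obtain_subset_with_card_n[OF cG] by metis
  define D where "D = {p \<in> A \<times> A. \<not> hg_equiv G (fst p) (snd p)}"
  define Wp where "Wp a b w \<longleftrightarrow> fst w \<in> verts G - {a,b} \<and> snd w \<in> verts G - {a,b} \<and>
            \<not> ({a, fst w, snd w} \<in> edges G \<longleftrightarrow> {b, fst w, snd w} \<in> edges G)" for a b w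
  define wit where "wit a b = (SOME w. Wp a b w)" for a b
  have witP: "Wp a b (wit a b)" if "\<not> hg_equiv G a b" for a b
    unfolding wit_def Wp_def by (rule someI_ex[OF not_equiv_wit[OF that]])
  define U where "U = A \<union> (\<lambda>p. fst (wit (fst p) (snd p))) ` D \<union> (\<lambda>p. snd (wit (fst p) (snd p))) ` D"
  have fD: "finite D" unfolding D_def using A(3) by simp
  have cD: "card D \<le> (2*K)^2"
  proof -
    have "card D \<le> card (A \<times> A)" unfolding D_def using A(3) by (intro card_mono) auto
    also have "\<dots> = (2*K)^2" using A(2) by (simp add: card_cartesian_product power2_eq_square)
    finally show ?thesis .
  qed
  have fU: "finite U" unfolding U_def using A(3) fD by simp
  have AU: "A \<subseteq> U" unfolding U_def by blast
  have cU: "card U \<le> 2*K + 8*K^2"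
  proof -
    have "card U \<le> card A + card ((\<lambda>p. fst (wit (fst p) (snd p))) ` D) + card ((\<lambda>p. snd (wit (fst p) (snd p))) ` D)"
      unfolding U_def by (meson card_Un_le add_le_mono order_trans le_refl)
    also have "\<dots> \<le> card A + card D + card D" by (intro add_mono card_image_le fD le_refl)
    also have "\<dots> \<le> 2*K + 8*K^2" using A(2) cD by (simp add: power2_eq_square)
    finally show ?thesis .
  qed
  have UV: "U \<subseteq> verts G"
  proof -
    have "(\<lambda>p. fst (wit (fst p) (snd p))) ` D \<subseteq> verts G"
      using witP unfolding D_def Wp_def by blast
    moreover have "(\<lambda>p. snd (wit (fst p) (snd p))) ` D \<subseteq> verts G"
      using witP unfolding D_def Wp_def by blast
    ultimately show ?thesis unfolding U_def using A(1) by blast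
  qed
  have Une: "card U \<ge> 1"
  proof -
    have "card A \<le> card U" by (rule card_mono[OF fU AU])
    then show ?thesis using A(2) K1 by simp
  qed
  define n where "n = max N0 1"
  have n1: "n \<ge> 1" unfolding n_def by simp
  obtain B where B: "B \<in> H" "is_blowup n G B" using bl n1 by blast
  have B3: "is_3graph B" using B(2) unfolding is_blowup_def by blast
  obtain f where f1: "f ` verts B \<subseteq> verts G" and f2: "\<forall>u\<in>verts G. card {x \<in> verts B. f x = u} = n"
    and f3: "\<forall>x1\<in>verts B. \<forall>x2\<in>verts B. \<forall>x3\<in>verts B.
         f x1 \<noteq> f x2 \<and> f x1 \<noteq> f x3 \<and> f x2 \<noteq> f x3 \<longrightarrow>
         ({x1,x2,x3} \<in> edges B \<longleftrightarrow> {f x1, f x2, f x3} \<in> edges G)"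
    using B(2) unfolding is_blowup_def by blast
  define W where "W = {x \<in> verts B. f x \<in> U}"
  define B' where "B' = induced_sub B W"
  have WB: "W \<subseteq> verts B" unfolding W_def by blast
  have B'H: "B' \<in> H" using hH B(1) WB unfolding hereditary_def B'_def by blast
  have vB': "verts B' = W" unfolding B'_def induced_sub_def verts_def by simp
  have eB': "edges B' = {e \<in> edges B. e \<subseteq> W}" unfolding B'_def induced_sub_def edges_def by simp
  have fW: "finite W" using B3 WB unfolding is_3graph_def using finite_subset by blast
  define Fu where "Fu u = {x \<in> W. f x = u}" for u
  have cFu: "card (Fu u) = n" if "u \<in> U" for u
  proof -
    have "Fu u = {x \<in> verts B. f x = u}" unfolding Fu_def W_def using that by blast
    then show ?thesis using f2 UV that by auto
  qed
  have FuW: "Fu u \<subseteq> W" for u unfolding Fu_def by blast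
  have cW: "card W = card U * n"
  proof -
    have "W = (\<Union>u\<in>U. Fu u)" unfolding W_def Fu_def by blast
    moreover have "card (\<Union>u\<in>U. Fu u) = (\<Sum>u\<in>U. card (Fu u))"
      by (rule card_UN_disjoint[OF fU]) (use fW FuW finite_subset in \<open>auto simp: Fu_def\<close>)
    moreover have "(\<Sum>u\<in>U. card (Fu u)) = card U * n" using cFu by simp
    ultimately show ?thesis by simp
  qed
  have "card W \<ge> N0" using cW Une unfolding n_def
    by (metis le_trans max.cobounded1 mult_1 mult_le_mono1)
  then obtain P where P: "is_partition P W" "card P \<le> M" "eps_regular_partition B' \<epsilon> P"
    using N0 B'H vB' by metis
  have p: "part_of P W" by (rule part_of_partition[OF P(1) fW])
  define k where "k = card P"
  have Wne: "W \<noteq> {}" using cW Une n1 fW by (metis card.empty mult_is_0 not_one_le_zero)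
  have Pne: "P \<noteq> {}" using Wne part_ofD(4)[OF p] by blast
  have k1: "k \<ge> 1" unfolding k_def using Pne part_ofD(1)[OF p] by (simp add: Suc_le_eq card_gt_0_iff)
  have kK: "k < K" using P(2) MK unfolding k_def by simp
  have major: "\<exists>X\<in>P. card (Fu u \<inter> X) * k \<ge> n" if "u \<in> U" for u
    using major_part[OF p FuW[of u] Pne] cFu[OF that] unfolding k_def by simp
  define pm where "pm u = (SOME X. X \<in> P \<and> card (Fu u \<inter> X) * k \<ge> n)" for u
  have pmP: "pm u \<in> P \<and> card (Fu u \<inter> pm u) * k \<ge> n" if "u \<in> U" for u
  proof -
    have "\<exists>X. X \<in> P \<and> card (Fu u \<inter> X) * k \<ge> n" using major[OF that] by blast
    then show ?thesis unfolding pm_def by (rule someI_ex)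
  qed
  have pig: "\<exists>X\<in>P. card {a\<in>A. pm a = X} \<ge> 3"
  proof (rule pigeon3[OF part_ofD(1)[OF p] A(3)])
    show "\<forall>a\<in>A. pm a \<in> P" using pmP AU by blast
    show "2 * card P < card A" using A(2) kK unfolding k_def by simp
  qed
  then obtain X where X: "X \<in> P" "card {a\<in>A. pm a = X} \<ge> 3" by blast
  obtain a b c where abc: "a \<in> {a\<in>A. pm a = X}" "b \<in> {a\<in>A. pm a = X}" "c \<in> {a\<in>A. pm a = X}"
    "a \<noteq> b" "a \<noteq> c" "b \<noteq> c"
    using three_distinct[OF X(2)] by blast
  have "\<exists>a0 b0. a0 \<in> A \<and> b0 \<in> A \<and> a0 \<noteq> b0 \<and> pm a0 = X \<and> pm b0 = X \<and> \<not> hg_equiv G a0 b0"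
  proof (rule ccontr)
    assume neg: "\<not> (\<exists>a0 b0. a0 \<in> A \<and> b0 \<in> A \<and> a0 \<noteq> b0 \<and> pm a0 = X \<and> pm b0 = X \<and> \<not> hg_equiv G a0 b0)"
    have "hg_equiv G a b" using neg abc by blast
    moreover have "hg_equiv G a c" using neg abc by blast
    ultimately have "{a,b,c} \<subseteq> {y\<in>verts G. hg_equiv G a y}" using abc A(1) hg_equiv_refl[of G a] by auto
    then have "card {a,b,c} \<le> card {y\<in>verts G. hg_equiv G a y}" by (rule card_mono[rotated]) (simp add: fVG)
    moreover have "card {a,b,c} = 3" using abc(4-6) by simp
    moreover have "card {y\<in>verts G. hg_equiv G a y} \<le> 2" using irr abc(1) A(1) unfolding irreducible_def by blast
    ultimately show False by simp
  qed
  then obtain a0 b0 where ab: "a0 \<in> A" "b0 \<in> A" "a0 \<noteq> b0" "pm a0 = X" "pm b0 = X" "\<not> hg_equiv G a0 b0"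
    by blast
  have Dab: "(a0,b0) \<in> D" unfolding D_def using ab by simp
  define w1 where "w1 = fst (wit a0 b0)"
  define w2 where "w2 = snd (wit a0 b0)"
  have wp: "Wp a0 b0 (wit a0 b0)" by (rule witP[OF ab(6)])
  then have w: "w1 \<in> verts G - {a0,b0}" "w2 \<in> verts G - {a0,b0}"
    "\<not> ({a0,w1,w2} \<in> edges G \<longleftrightarrow> {b0,w1,w2} \<in> edges G)"
    unfolding Wp_def w1_def w2_def by blast+
  have wU: "w1 \<in> U" "w2 \<in> U" unfolding U_def w1_def w2_def
    using rev_image_eqI[OF Dab, of "fst (wit a0 b0)" "\<lambda>p. fst (wit (fst p) (snd p))"]
      rev_image_eqI[OF Dab, of "snd (wit a0 b0)" "\<lambda>p. snd (wit (fst p) (snd p))"] by auto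
  have w12: "w1 \<noteq> w2"
  proof
    assume eq: "w1 = w2"
    have "card {a0,w1,w2} \<noteq> 3" "card {b0,w1,w2} \<noteq> 3" unfolding eq by (simp_all add: card_insert_if)
    then have "{a0,w1,w2} \<notin> edges G" "{b0,w1,w2} \<notin> edges G" using e3 by auto
    then show False using w(3) by simp
  qed
  have aU: "a0 \<in> U" "b0 \<in> U" using ab AU by blast+
  define Y where "Y = pm w1"
  define Z where "Z = pm w2"
  have XYZ: "X \<in> P" "Y \<in> P" "Z \<in> P" using X(1) pmP wU unfolding Y_def Z_def by blast+
  define Xa where "Xa = Fu a0 \<inter> X"
  define Xb where "Xb = Fu b0 \<inter> X"
  define Y1 where "Y1 = Fu w1 \<inter> Y"
  define Z1 where "Z1 = Fu w2 \<inter> Z"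
  have sz: "card Xa * k \<ge> n" "card Xb * k \<ge> n" "card Y1 * k \<ge> n" "card Z1 * k \<ge> n"
    using pmP[OF aU(1)] pmP[OF aU(2)] pmP[OF wU(1)] pmP[OF wU(2)] ab(4,5)
    unfolding Xa_def Xb_def Y1_def Z1_def Y_def Z_def by auto
  have subs: "Xa \<subseteq> X" "Xb \<subseteq> X" "Y1 \<subseteq> Y" "Z1 \<subseteq> Z" unfolding Xa_def Xb_def Y1_def Z1_def by blast+
  have fP: "finite X" "finite Y" "finite Z" using XYZ part_ofD(2)[OF p] by blast+
  have fS: "finite Xa" "finite Xb" "finite Y1" "finite Z1" using subs fP finite_subset by blast+
  have neS: "Xa \<noteq> {}" "Xb \<noteq> {}" "Y1 \<noteq> {}" "Z1 \<noteq> {}" using sz n1 by (auto simp: card_gt_0_iff)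
  have ec: "{x,y,z} \<in> edges B' \<longleftrightarrow> {u1,u2,u3} \<in> edges G"
    if "x \<in> Fu u1" "y \<in> Fu u2" "z \<in> Fu u3" "u1 \<noteq> u2" "u1 \<noteq> u3" "u2 \<noteq> u3" for x y z u1 u2 u3
  proof -
    have inW: "x \<in> W" "y \<in> W" "z \<in> W" using that unfolding Fu_def by blast+
    have fx: "f x = u1" "f y = u2" "f z = u3" using that unfolding Fu_def by blast+
    have inB: "x \<in> verts B" "y \<in> verts B" "z \<in> verts B" using inW WB by blast+
    have "{x,y,z} \<in> edges B' \<longleftrightarrow> {x,y,z} \<in> edges B" unfolding eB' using inW by blast
    also have "\<dots> \<longleftrightarrow> {f x, f y, f z} \<in> edges G" using f3 inB fx that(4-6) by metis
    finally show ?thesis unfolding fx .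
  qed
  have da: "density B' Xa Y1 Z1 = (if {a0,w1,w2} \<in> edges G then 1 else 0)"
  proof (rule density_const[OF fS(1,3,4) neS(1,3,4)])
    show "\<forall>x\<in>Xa. \<forall>y\<in>Y1. \<forall>z\<in>Z1. ({x, y, z} \<in> edges B') = ({a0,w1,w2} \<in> edges G)"
      using ec w w12 unfolding Xa_def Y1_def Z1_def by blast
  qed
  have db: "density B' Xb Y1 Z1 = (if {b0,w1,w2} \<in> edges G then 1 else 0)"
  proof (rule density_const[OF fS(2,3,4) neS(2,3,4)])
    show "\<forall>x\<in>Xb. \<forall>y\<in>Y1. \<forall>z\<in>Z1. ({x, y, z} \<in> edges B') = ({b0,w1,w2} \<in> edges G)"
      using ec w w12 unfolding Xb_def Y1_def Z1_def by blast
  qed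
  have eku: "\<epsilon> * (real k * real (card U))^3 < 1"
    by (rule arith1[OF k1 Une kK cU eK e(1)])
  have ku1: "real k * real (card U) \<ge> 1"
  proof -
    have "real k \<ge> 1" "real (card U) \<ge> 1" using k1 Une by simp_all
    then show ?thesis using mult_mono[of 1 "real k" 1 "real (card U)"] by simp
  qed
  have kpos: "real k > 0" using k1 by simp
  have cXW: "real (card T) \<le> real (card U) * real n" if "T \<in> P" for T
  proof -
    have "T \<subseteq> W" using that part_ofD(4)[OF p] by blast
    then have "card T \<le> card W" by (rule card_mono[OF fW])
    then show ?thesis using cW natle by simp
  qed
  have big: "\<epsilon> * real (card T) \<le> real (card S)"
    if "T \<in> P" "card S * k \<ge> n" for T S
  proof (rule arith2[OF _ cXW[OF that(1)] eku ku1 kpos e(1)])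
    show "real (card S) * real k \<ge> real n" using natle[OF that(2)] by simp
    show "real n \<ge> 0" by simp
  qed
  have nr: "\<not> eps_regular_triple B' \<epsilon> X Y Z"
  proof
    assume r: "eps_regular_triple B' \<epsilon> X Y Z"
    have "\<bar>density B' X Y Z - density B' Xa Y1 Z1\<bar> \<le> \<epsilon>"
      using r subs big[OF XYZ(1) sz(1)] big[OF XYZ(2) sz(3)] big[OF XYZ(3) sz(4)]
      unfolding eps_regular_triple_def by blast
    moreover have "\<bar>density B' X Y Z - density B' Xb Y1 Z1\<bar> \<le> \<epsilon>"
      using r subs big[OF XYZ(1) sz(2)] big[OF XYZ(2) sz(3)] big[OF XYZ(3) sz(4)]
      unfolding eps_regular_triple_def by blast
    moreover have "\<bar>density B' Xa Y1 Z1 - density B' Xb Y1 Z1\<bar> = 1"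
      unfolding da db using w(3) by auto
    ultimately show False using e(2) by linarith
  qed
  have mb: "wt X Y Z \<le> \<epsilon> * real (card W) ^ 3"
    by (rule mass_bound[OF p vB' P(3) XYZ nr])
  have "1 \<le> \<epsilon> * (real k * real (card U))^3"
  proof (rule arith3)
    show "real (card Xa) * real k \<ge> real n" using natle[OF sz(1)] by simp
    show "real (card Y1) * real k \<ge> real n" using natle[OF sz(3)] by simp
    show "real (card Z1) * real k \<ge> real n" using natle[OF sz(4)] by simp
    show "real (card Xa) \<le> real (card X)" using card_mono[OF fP(1) subs(1)] by simp
    show "real (card Y1) \<le> real (card Y)" using card_mono[OF fP(2) subs(3)] by simp
    show "real (card Z1) \<le> real (card Z)" using card_mono[OF fP(3) subs(4)] by simp
    show "real (card X) * real (card Y) * real (card Z) \<le> \<epsilon> * (real (card U) * real n)^3"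
      using mb unfolding wt_def cW by (simp add: power_mult_distrib)
    show "real n > 0" using n1 by simp
    show "real k > 0" by (rule kpos)
  qed simp_all
  then show False using eku by simp
qed


lemma eps_arith:
  fixes \<epsilon> :: real
  assumes e: "0 < \<epsilon>" "\<epsilon> < 1 / 2^40"
  defines "x \<equiv> \<epsilon> powr (-1/20)"
  shows "x \<ge> 4" "1000 * real (nat \<lceil>x\<rceil>) ^ 9 * \<epsilon> \<le> 1"
proof -
  have xp: "x > 0" unfolding x_def using e by simp
  have "x ^ 20 = x powr 20" using xp by (simp add: powr_realpow)
  also have "\<dots> = \<epsilon> powr (-1)" unfolding x_def powr_powr by simp
  also have "\<dots> = 1 / \<epsilon>" using e by (simp add: powr_minus_divide)
  finally have x20: "x ^ 20 = 1 / \<epsilon>" .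
  have "(4::real) ^ 20 = 2 ^ 40" by simp
  also have "\<dots> < 1 / \<epsilon>" using e by (simp add: field_simps)
  finally have "4 ^ 20 < x ^ 20" using x20 by simp
  then have x4: "4 < x" by (rule power_less_imp_less_base) (use xp in simp)
  then show "x \<ge> 4" by simp
  define K where "K = nat \<lceil>x\<rceil>"
  have "real K \<le> x + 1" unfolding K_def using xp by linarith
  also have "\<dots> \<le> 2 * x" using x4 by simp
  finally have K2: "real K \<le> 2 * x" .
  have "real K ^ 9 \<le> (2 * x) ^ 9" using K2 by (intro power_mono) auto
  then have "1000 * real K ^ 9 * \<epsilon> \<le> 1000 * (2 * x) ^ 9 * \<epsilon>" using e by simp
  also have "\<dots> = 512000 * (x ^ 9 * \<epsilon>)" by (simp add: power_mult_distrib)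
  also have "x ^ 9 * \<epsilon> = 1 / x ^ 11"
  proof -
    have "x ^ 9 * \<epsilon> * x ^ 11 = x ^ 20 * \<epsilon>" by (simp add: power_add[symmetric] mult_ac)
    also have "\<dots> = 1" using x20 e by simp
    finally show ?thesis using xp by (simp add: field_simps)
  qed
  also have "512000 * (1 / x ^ 11) \<le> 1"
  proof -
    have "(4::real) ^ 11 \<le> x ^ 11" using x4 by (intro power_mono) auto
    then have "512000 \<le> x ^ 11" by simp
    then show ?thesis using xp by (simp add: field_simps)
  qed
  finally show "1000 * real (nat \<lceil>x\<rceil>) ^ 9 * \<epsilon> \<le> 1" unfolding K_def .
qed

theorem theorem7p5:
  assumes "hereditary H"
    and "\<exists>S. infinite S \<and> S \<subseteq> B_set H \<and> (\<forall>G\<in>S. \<forall>G'\<in>S. G \<noteq> G' \<longrightarrow> \<not> hg_iso G G')"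
  shows "(\<exists>C>0. \<exists>\<epsilon>0>0. \<forall>\<epsilon>. 0 < \<epsilon> \<and> \<epsilon> < \<epsilon>0 \<longrightarrow> \<epsilon> powr (-C) \<le> real (M_reg H \<epsilon>))
       \<and> (M_hom_defined H \<longrightarrow> (\<forall>\<epsilon>>0. M_reg H \<epsilon> \<le> M_hom H (\<epsilon> ^ 4)))"
proof
  obtain S where S: "infinite S" "S \<subseteq> B_set H" "\<forall>G\<in>S. \<forall>G'\<in>S. G \<noteq> G' \<longrightarrow> \<not> hg_iso G G'"
    using assms(2) by blast
  have S3: "\<forall>G\<in>S. is_3graph G" using S(2) unfolding B_set_def by blast
  have "\<forall>\<epsilon>. 0 < \<epsilon> \<and> \<epsilon> < 1 / 2^40 \<longrightarrow> \<epsilon> powr (-(1/20)) \<le> real (M_reg H \<epsilon>)"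
  proof (intro allI impI)
    fix \<epsilon> :: real assume e: "0 < \<epsilon> \<and> \<epsilon> < 1 / 2^40"
    define x where "x = \<epsilon> powr (-1/20)"
    define K where "K = nat \<lceil>x\<rceil>"
    have x4: "x \<ge> 4" and eK: "1000 * real K ^ 9 * \<epsilon> \<le> 1"
      using eps_arith[of \<epsilon>] e unfolding x_def K_def by auto
    have xK: "x \<le> real K" unfolding K_def by linarith
    have K1: "K \<ge> 1" using xK x4 by linarith
    have e2: "\<epsilon> < 1/2" using e by simp
    obtain G where G: "G \<in> S" "card (verts G) \<ge> 2 * K" using large_in_S[OF S(1) S3 S(3)] by blast
    have bw: "bound_works eps_regular_partition H \<epsilon> (M_reg H \<epsilon>)"
      unfolding M_reg_def by (rule LeastI_ex) (use reg_bound_works[OF assms(1)] e in blast)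
    have "\<not> M_reg H \<epsilon> < K"
    proof
      assume "M_reg H \<epsilon> < K"
      from lower_main[OF assms(1) _ G(2) K1 _ e2 eK this] S(2) G(1) e bw show False by blast
    qed
    then have "real K \<le> real (M_reg H \<epsilon>)" by simp
    then show "\<epsilon> powr (-(1/20)) \<le> real (M_reg H \<epsilon>)" using xK unfolding x_def by simp
  qed
  then show "\<exists>C>0. \<exists>\<epsilon>0>0. \<forall>\<epsilon>. 0 < \<epsilon> \<and> \<epsilon> < \<epsilon>0 \<longrightarrow> \<epsilon> powr (-C) \<le> real (M_reg H \<epsilon>)"
    by (intro exI[of _ "1/20"] conjI exI[of _ "1 / 2^40"]) auto
next
  show "M_hom_defined H \<longrightarrow> (\<forall>\<epsilon>>0. M_reg H \<epsilon> \<le> M_hom H (\<epsilon> ^ 4))"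
    using part2[OF assms(1)] by blast
qed


end
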